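(* Let $T=-T_{\mathfrak p}Q|_{\mathfrak p}+T_1Q|_{\mathfrak k_1}+\cdots+T_{r+s}Q|_{\mathfrak k_{r+s}}$ be a left-invariant $(0,2)$-tensor field on $G$ with $T_{\mathfrak p},T_1,\dots,T_{r+s}>0$. If $$\sum_{i=1}^{r+s}\frac{n^2\kappa_iT_{\mathfrak p}^2-d_i^2(1-\kappa_i)T_i^2}{nT_{\mathfrak p}T_i}-2n<0,$$ then the functional $S|_{\mathcal M_T^-}$ attains its global maximum.
   Context: Let $G$ be a connected non-compact simple Lie group with Lie algebra $\mathfrak g$, $K$ a maximal compact subgroup with Lie algebra $\mathfrak k$, $B$ the Killing form of $\mathfrak g$, and $\mathfrak p$ the $B$-orthogonal complement of $\mathfrak k$ in $\mathfrak g$. Let $Q=B|_{\mathfrak p}-B|_{\mathfrak k}$. Write $\mathfrak k=\mathfrak k_1\oplus\cdots\oplus\mathfrak k_{r+s}$, where $\mathfrak k_1,\dots,\mathfrak k_r$ are the simple ideals of $[\mathfrak k,\mathfrak k]$, $\mathfrak k_{r+1}$ is the centre of $\mathfrak k$, and $s=1$ if the centre is nontrivial, $s=0$ otherwise. Let $n=\dim\mathfrak p$, $d_i=\dim\mathfrak k_i$, and define $\kappa_i$ by $B_i=\kappa_iB|_{\mathfrak k_i}$, $B_i$ the Killing form of $\mathfrak k_i$. Left-invariant tensor fields on $G$ are identified with bilinear forms on $\mathfrak g$; $Q|_{\mathfrak u}$ denotes $Q$ restricted to $\mathfrak u$ and extended by zero on its $Q$-orthogonal complement. $\mathcal M_K$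 is the set of left-invariant metrics on $G$ naturally reductive with respect to $G\times K$ (acting by $(x,k)y=xyk^{-1}$), which by a theorem of Gordon are exactly the metrics $\beta Q|_{\mathfrak p}+\sum_i\alpha_iQ|_{\mathfrak k_i}$ with $\beta,\alpha_i>0$. $S$ is the scalar curvature functional, and $\mathcal M_T^-=\{g\in\mathcal M_K:\mathrm{tr}_gT=-1\}$. *)

theory Defs
  imports "HOL-Analysis.Analysis"
begin

text \<open>A finite-dimensional real Lie algebra is modelled on a euclidean space type 'g
  (the inner product is used only to compute traces of endomorphisms).\<close>

definition lie_algebra :: "('g::euclidean_space \<Rightarrow> 'g \<Rightarrow> 'g) \<Rightarrow> bool" where
  "lie_algebra br \<longleftrightarrow> (\<forall>x. linear (br x)) \<and> (\<forall>y. linear (\<lambda>x. br x y))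
     \<and> (\<forall>x y. br x y = - br y x)
     \<and> (\<forall>x y z. br x (br y z) + br y (br z x) + br z (br x y) = 0)"

definition trace_end :: "('g::euclidean_space \<Rightarrow> 'g) \<Rightarrow> real" where
  "trace_end f = (\<Sum>b\<in>Basis. f b \<bullet> b)"

definition killing :: "('g::euclidean_space \<Rightarrow> 'g \<Rightarrow> 'g) \<Rightarrow> 'g \<Rightarrow> 'g \<Rightarrow> real" where
  "killing br x y = trace_end (\<lambda>v. br x (br y v))"

definition lie_ideal_of :: "('g::euclidean_space \<Rightarrow> 'g \<Rightarrow> 'g) \<Rightarrow> 'g set \<Rightarrow> 'g set \<Rightarrow> bool" where
  "lie_ideal_of br h I \<longleftrightarrow> subspace I \<and> I \<subseteq> h \<and> (\<forall>x\<in>h. \<forall>y\<in>I. br x y \<in> I)"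

definition simple_lie :: "('g::euclidean_space \<Rightarrow> 'g \<Rightarrow> 'g) \<Rightarrow> 'g set \<Rightarrow> bool" where
  "simple_lie br I \<longleftrightarrow> (\<exists>x\<in>I. \<exists>y\<in>I. br x y \<noteq> 0)
     \<and> (\<forall>J. lie_ideal_of br I J \<longrightarrow> J = {0} \<or> J = I)"

definition noncompact_lie :: "('g::euclidean_space \<Rightarrow> 'g \<Rightarrow> 'g) \<Rightarrow> bool" where
  "noncompact_lie br \<longleftrightarrow> \<not> (\<forall>x. x \<noteq> 0 \<longrightarrow> killing br x x < 0)"

definition derived :: "('g::euclidean_space \<Rightarrow> 'g \<Rightarrow> 'g) \<Rightarrow> 'g set \<Rightarrow> 'g set" where
  "derived br h = span {br x y | x y. x \<in> h \<and> y \<in> h}"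

definition centre :: "('g::euclidean_space \<Rightarrow> 'g \<Rightarrow> 'g) \<Rightarrow> 'g set \<Rightarrow> 'g set" where
  "centre br h = {x \<in> h. \<forall>y\<in>h. br x y = 0}"

definition kperp :: "('g::euclidean_space \<Rightarrow> 'g \<Rightarrow> 'g) \<Rightarrow> 'g set \<Rightarrow> 'g set" where
  "kperp br k = {x. \<forall>y\<in>k. killing br x y = 0}"

text \<open>k is the Lie algebra of a maximal compact subgroup: the k-part of a Cartan decomposition.\<close>
definition cartan_subalg :: "('g::euclidean_space \<Rightarrow> 'g \<Rightarrow> 'g) \<Rightarrow> 'g set \<Rightarrow> bool" where
  "cartan_subalg br k \<longleftrightarrow> subspace k \<and> (\<forall>x\<in>k. \<forall>y\<in>k. br x y \<in> k)
     \<and> (\<forall>x\<in>k. x \<noteq> 0 \<longrightarrow> killing br x x < 0)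
     \<and> (\<forall>x\<in>kperp br k. \<forall>y\<in>kperp br k. br x y \<in> k)
     \<and> (\<forall>x\<in>kperp br k. x \<noteq> 0 \<longrightarrow> killing br x x > 0)"

definition projk :: "('g::euclidean_space \<Rightarrow> 'g \<Rightarrow> 'g) \<Rightarrow> 'g set \<Rightarrow> 'g \<Rightarrow> 'g" where
  "projk br k x = (THE u. u \<in> k \<and> (\<forall>w\<in>k. killing br (x - u) w = 0))"

definition Qform :: "('g::euclidean_space \<Rightarrow> 'g \<Rightarrow> 'g) \<Rightarrow> 'g set \<Rightarrow> 'g \<Rightarrow> 'g \<Rightarrow> real" where
  "Qform br k x y = killing br (x - projk br k x) (y - projk br k y)
                    - killing br (projk br k x) (projk br k y)"

definition qproj :: "('g::euclidean_space \<Rightarrow> 'g \<Rightarrow> 'g) \<Rightarrow> 'g set \<Rightarrow> 'g set \<Rightarrow> 'g \<Rightarrow> 'g" where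
  "qproj br k U x = (THE u. u \<in> U \<and> (\<forall>w\<in>U. Qform br k (x - u) w = 0))"

text \<open>Q restricted to U, extended by zero on its Q-orthogonal complement.\<close>
definition Qres :: "('g::euclidean_space \<Rightarrow> 'g \<Rightarrow> 'g) \<Rightarrow> 'g set \<Rightarrow> 'g set \<Rightarrow> 'g \<Rightarrow> 'g \<Rightarrow> real" where
  "Qres br k U x y = Qform br k (qproj br k U x) (qproj br k U y)"

text \<open>Killing form of the subalgebra U (U invariant under ad of its elements).\<close>
definition killing_on :: "('g::euclidean_space \<Rightarrow> 'g \<Rightarrow> 'g) \<Rightarrow> 'g set \<Rightarrow> 'g set \<Rightarrow> 'g \<Rightarrow> 'g \<Rightarrow> real" where
  "killing_on br k U x y = trace_end (\<lambda>v. br x (br y (qproj br k U v)))"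

definition kappa :: "('g::euclidean_space \<Rightarrow> 'g \<Rightarrow> 'g) \<Rightarrow> 'g set \<Rightarrow> 'g set \<Rightarrow> real" where
  "kappa br k U = (THE c. \<forall>x\<in>U. \<forall>y\<in>U. killing_on br k U x y = c * killing br x y)"

text \<open>ks 0, ..., ks (r-1) are the simple ideals of [k,k] (listed without repetition);
  if the centre of k is nontrivial, m = r+1 and ks r is the centre, otherwise m = r.\<close>
definition k_decomp :: "('g::euclidean_space \<Rightarrow> 'g \<Rightarrow> 'g) \<Rightarrow> 'g set \<Rightarrow> (nat \<Rightarrow> 'g set) \<Rightarrow> nat \<Rightarrow> nat \<Rightarrow> bool" where
  "k_decomp br k ks r m \<longleftrightarrow> inj_on ks {..<r}
     \<and> ks ` {..<r} = {I. lie_ideal_of br (derived br k) I \<and> simple_lie br I}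
     \<and> (if centre br k = {0} then m = r else m = Suc r \<and> ks r = centre br k)"

definition kform :: "('g::euclidean_space \<Rightarrow> 'g \<Rightarrow> 'g) \<Rightarrow> 'g set \<Rightarrow> (nat \<Rightarrow> 'g set) \<Rightarrow> nat
     \<Rightarrow> real \<Rightarrow> (nat \<Rightarrow> real) \<Rightarrow> 'g \<Rightarrow> 'g \<Rightarrow> real" where
  "kform br k ks m c0 c x y =
     c0 * Qres br k (kperp br k) x y + (\<Sum>i<m. c i * Qres br k (ks i) x y)"

definition tr_wrt :: "('g::euclidean_space \<Rightarrow> 'g \<Rightarrow> real) \<Rightarrow> ('g \<Rightarrow> 'g \<Rightarrow> real) \<Rightarrow> real" where
  "tr_wrt g T = trace_end (\<lambda>x. THE z. \<forall>w. g z w = T x w)"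

text \<open>Curvature of the left-invariant metric g (a bilinear form on the Lie algebra).\<close>
definition adj :: "('g::euclidean_space \<Rightarrow> 'g \<Rightarrow> real) \<Rightarrow> ('g \<Rightarrow> 'g \<Rightarrow> 'g) \<Rightarrow> 'g \<Rightarrow> 'g \<Rightarrow> 'g" where
  "adj g br x y = (THE z. \<forall>w. g z w = g y (br x w))"

definition levi_civita :: "('g::euclidean_space \<Rightarrow> 'g \<Rightarrow> real) \<Rightarrow> ('g \<Rightarrow> 'g \<Rightarrow> 'g) \<Rightarrow> 'g \<Rightarrow> 'g \<Rightarrow> 'g" where
  "levi_civita g br x y = (1/2) *\<^sub>R (br x y - adj g br x y - adj g br y x)"

definition curv :: "('g::euclidean_space \<Rightarrow> 'g \<Rightarrow> real) \<Rightarrow> ('g \<Rightarrow> 'g \<Rightarrow> 'g) \<Rightarrow> 'g \<Rightarrow> 'g \<Rightarrow> 'g \<Rightarrow> 'g" where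
  "curv g br x y z = levi_civita g br x (levi_civita g br y z) - levi_civita g br y (levi_civita g br x z)
     - levi_civita g br (br x y) z"

definition ricci :: "('g::euclidean_space \<Rightarrow> 'g \<Rightarrow> real) \<Rightarrow> ('g \<Rightarrow> 'g \<Rightarrow> 'g) \<Rightarrow> 'g \<Rightarrow> 'g \<Rightarrow> real" where
  "ricci g br y z = trace_end (\<lambda>x. curv g br x y z)"

definition scal :: "('g::euclidean_space \<Rightarrow> 'g \<Rightarrow> real) \<Rightarrow> ('g \<Rightarrow> 'g \<Rightarrow> 'g) \<Rightarrow> real" where
  "scal g br = tr_wrt g (ricci g br)"

text \<open>M_K (via Gordon's description) and M_T^-.\<close>
definition MK :: "('g::euclidean_space \<Rightarrow> 'g \<Rightarrow> 'g) \<Rightarrow> 'g set \<Rightarrow> (nat \<Rightarrow> 'g set) \<Rightarrow> nat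
     \<Rightarrow> ('g \<Rightarrow> 'g \<Rightarrow> real) set" where
  "MK br k ks m = {kform br k ks m \<beta> \<alpha> | \<beta> \<alpha>. \<beta> > 0 \<and> (\<forall>i<m. \<alpha> i > 0)}"

definition MTminus :: "('g::euclidean_space \<Rightarrow> 'g \<Rightarrow> 'g) \<Rightarrow> 'g set \<Rightarrow> (nat \<Rightarrow> 'g set) \<Rightarrow> nat
     \<Rightarrow> ('g \<Rightarrow> 'g \<Rightarrow> real) \<Rightarrow> ('g \<Rightarrow> 'g \<Rightarrow> real) set" where
  "MTminus br k ks m T = {g \<in> MK br k ks m. tr_wrt g T = -1}"

end

theory Submission
  imports Defs
begin


lemma trace_end_add: "trace_end (\<lambda>v. f v + h v) = trace_end f + trace_end h"
  by (simp add: trace_end_def inner_add_left sum.distrib)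

lemma trace_end_diff: "trace_end (\<lambda>v. f v - h v) = trace_end f - trace_end h"
  by (simp add: trace_end_def inner_diff_left sum_subtractf)

lemma trace_end_scale: "trace_end (\<lambda>v. c *\<^sub>R f v) = c * trace_end f"
  by (simp add: trace_end_def sum_distrib_left)

lemma trace_end_sum: "trace_end (\<lambda>v. \<Sum>i\<in>I. f i v) = (\<Sum>i\<in>I. trace_end (f i))"
  by (simp add: trace_end_def inner_sum_left sum.swap[of _ I])

lemma trace_end_comp_expand:
  assumes "linear f"
  shows "trace_end (\<lambda>v. f (h v)) = (\<Sum>b\<in>Basis. \<Sum>c\<in>Basis. (h b \<bullet> c) * (f c \<bullet> b))"
proof -
  have "f (h b) = (\<Sum>c\<in>Basis. (h b \<bullet> c) *\<^sub>R f c)" for b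
  proof -
    have "f (h b) = f (\<Sum>c\<in>Basis. (h b \<bullet> c) *\<^sub>R c)" by (simp add: euclidean_representation)
    also have "\<dots> = (\<Sum>c\<in>Basis. (h b \<bullet> c) *\<^sub>R f c)"
      by (simp add: linear_sum[OF assms] linear_scale[OF assms])
    finally show ?thesis .
  qed
  then show ?thesis by (simp add: trace_end_def inner_sum_left)
qed

lemma trace_end_cyclic:
  assumes "linear f" "linear h"
  shows "trace_end (\<lambda>v. f (h v)) = trace_end (\<lambda>v. h (f v))"
  unfolding trace_end_comp_expand[OF assms(1)] trace_end_comp_expand[OF assms(2)]
  by (subst sum.swap) (simp add: mult.commute)

definition onb :: "('g::euclidean_space \<Rightarrow> 'g \<Rightarrow> real) \<Rightarrow> 'g set \<Rightarrow> 'g set \<Rightarrow> bool" where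
  "onb F U S \<longleftrightarrow> finite S \<and> S \<subseteq> U \<and> (\<forall>a\<in>S. \<forall>b\<in>S. F a b = (if a = b then 1 else 0))
     \<and> (\<forall>x\<in>U. x = (\<Sum>a\<in>S. F x a *\<^sub>R a))"

lemma trace_onb:
  fixes F :: "'g::euclidean_space \<Rightarrow> 'g \<Rightarrow> real"
  assumes S: "onb F UNIV S" and f: "linear f" and F: "\<And>y. linear (\<lambda>x. F x y)"
  shows "trace_end f = (\<Sum>a\<in>S. F (f a) a)"
proof -
  have fin: "finite S" using S by (simp add: onb_def)
  have rep: "x = (\<Sum>a\<in>S. F x a *\<^sub>R a)" for x using S by (simp add: onb_def)
  have lin: "linear (\<lambda>x. F (f x) a)" for a
    using linear_compose[OF f F[of a]] by (simp add: o_def)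
  have "trace_end f = (\<Sum>b\<in>Basis. (\<Sum>a\<in>S. F (f b) a *\<^sub>R a) \<bullet> b)"
    unfolding trace_end_def by (metis rep)
  also have "\<dots> = (\<Sum>b\<in>Basis. \<Sum>a\<in>S. F (f b) a * (a \<bullet> b))"
    by (simp add: inner_sum_left)
  also have "\<dots> = (\<Sum>a\<in>S. \<Sum>b\<in>Basis. (a \<bullet> b) * F (f b) a)"
    by (subst sum.swap) (simp add: mult.commute)
  also have "\<dots> = (\<Sum>a\<in>S. F (f a) a)"
  proof (rule sum.cong[OF refl])
    fix a
    have "F (f a) a = F (f (\<Sum>b\<in>Basis. (a \<bullet> b) *\<^sub>R b)) a" by (simp add: euclidean_representation)
    also have "\<dots> = (\<Sum>b\<in>Basis. F (f ((a \<bullet> b) *\<^sub>R b)) a)"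
      by (rule linear_sum[OF lin[of a]])
    also have "\<dots> = (\<Sum>b\<in>Basis. (a \<bullet> b) * F (f b) a)"
      using linear_scale[OF lin[of a]] by simp
    finally show "(\<Sum>b\<in>Basis. (a \<bullet> b) * F (f b) a) = F (f a) a" by simp
  qed
  finally show ?thesis .
qed

lemma onb_coeff:
  assumes "onb F U S" "bilinear F" "b \<in> S"
  shows "F (\<Sum>a\<in>S. c a *\<^sub>R a) b = c b"
proof -
  have fin: "finite S" using assms by (simp add: onb_def)
  have lin: "linear (\<lambda>x. F x b)" using assms(2) by (simp add: bilinear_def)
  have "F (\<Sum>a\<in>S. c a *\<^sub>R a) b = (\<Sum>a\<in>S. F (c a *\<^sub>R a) b)"
    by (rule linear_sum[OF lin])
  also have "\<dots> = (\<Sum>a\<in>S. c a * F a b)"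
    by (simp add: bilinear_lmul[OF assms(2)])
  also have "\<dots> = (\<Sum>a\<in>S. if a = b then c a else 0)"
    using assms(1,3) by (intro sum.cong) (auto simp: onb_def)
  also have "\<dots> = c b" using fin assms(3) by simp
  finally show ?thesis .
qed

lemma bilinear_cmult:
  fixes F :: "'a::real_vector \<Rightarrow> 'b::real_vector \<Rightarrow> real"
  assumes "bilinear F" shows "bilinear (\<lambda>x y. c * F x y)"
  by (simp add: bilinear_def linear_iff bilinear_ladd[OF assms] bilinear_radd[OF assms]
      bilinear_lmul[OF assms] bilinear_rmul[OF assms] algebra_simps)

lemma onb_proj:
  fixes F :: "'g::euclidean_space \<Rightarrow> 'g \<Rightarrow> real"
  assumes S: "onb F U S" and bil: "bilinear F" and sym: "\<forall>x\<in>U. \<forall>y\<in>U. F x y = F y x"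
    and sub: "subspace U"
  shows "(\<Sum>a\<in>S. F x a *\<^sub>R a) \<in> U" "\<forall>w\<in>U. F (x - (\<Sum>a\<in>S. F x a *\<^sub>R a)) w = 0"
proof -
  have SU: "S \<subseteq> U" using S by (simp add: onb_def)
  show "(\<Sum>a\<in>S. F x a *\<^sub>R a) \<in> U"
    using SU sub by (intro subspace_sum) (auto intro: subspace_scale)
  show "\<forall>w\<in>U. F (x - (\<Sum>a\<in>S. F x a *\<^sub>R a)) w = 0"
  proof
    fix w assume w: "w \<in> U"
    define z where "z = x - (\<Sum>a\<in>S. F x a *\<^sub>R a)"
    have zb: "F z b = 0" if "b \<in> S" for b
      using onb_coeff[OF S bil that, of "\<lambda>a. F x a"] by (simp add: z_def bilinear_lsub[OF bil])
    have lin: "linear (F z)" using bil by (simp add: bilinear_def)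
    have "w = (\<Sum>b\<in>S. F w b *\<^sub>R b)" using S w by (simp add: onb_def)
    then have "F z w = F z (\<Sum>b\<in>S. F w b *\<^sub>R b)" by simp
    also have "\<dots> = (\<Sum>b\<in>S. F z (F w b *\<^sub>R b))" by (rule linear_sum[OF lin])
    also have "\<dots> = 0" using zb by (simp add: bilinear_rmul[OF bil])
    finally show "F (x - (\<Sum>a\<in>S. F x a *\<^sub>R a)) w = 0" by (simp add: z_def)
  qed
qed

lemma proj_unique:
  fixes F :: "'g::euclidean_space \<Rightarrow> 'g \<Rightarrow> real"
  assumes sub: "subspace U" and bil: "bilinear F" and pos: "\<forall>x\<in>U. x \<noteq> 0 \<longrightarrow> F x x \<noteq> 0"
    and u: "u \<in> U" "\<forall>w\<in>U. F (x - u) w = 0" and u': "u' \<in> U" "\<forall>w\<in>U. F (x - u') w = 0"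
  shows "u = u'"
proof -
  have d: "u' - u \<in> U" using u u' sub by (simp add: subspace_diff)
  have "F (u' - u) (u' - u) = F (x - u) (u' - u) - F (x - u') (u' - u)"
    by (simp add: bilinear_lsub[OF bil])
  also have "\<dots> = 0" using u u' d by simp
  finally show ?thesis using pos d by force
qed

lemma gs_aux:
  fixes F :: "'g::euclidean_space \<Rightarrow> 'g \<Rightarrow> real"
  assumes bil: "bilinear F"
  shows "dim U = n \<Longrightarrow> subspace U \<Longrightarrow> (\<forall>x\<in>U. \<forall>y\<in>U. F x y = F y x) \<Longrightarrow>
    (\<forall>x\<in>U. x \<noteq> 0 \<longrightarrow> F x x > 0) \<Longrightarrow> \<exists>S. onb F U S \<and> card S = dim U"
proof (induction n arbitrary: U rule: less_induct)
  case (less n U)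
  note sub = \<open>subspace U\<close>
  show ?case
  proof (cases "U \<subseteq> {0}")
    case True
    then have "\<forall>x\<in>U. x = 0" by auto
    then show ?thesis using True
      by (intro exI[of _ "{}"]) (auto simp: onb_def)
  next
    case False
    then obtain x where x: "x \<in> U" "x \<noteq> 0" by auto
    have Fx: "F x x > 0" using less.prems x by auto
    define e where "e = (1 / sqrt (F x x)) *\<^sub>R x"
    have eU: "e \<in> U" using x sub by (simp add: e_def subspace_scale)
    have Fee: "F e e = 1"
      using Fx by (simp add: e_def bilinear_lmul[OF bil] bilinear_rmul[OF bil])
    define U' where "U' = {y\<in>U. F e y = 0}"
    have linFe: "linear (F e)" using bil by (simp add: bilinear_def)
    have subU': "subspace U'"
      unfolding U'_def subspace_def
      using sub linear_add[OF linFe] linear_scale[OF linFe] linear_0[OF linFe]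
      by (auto simp: subspace_def)
    have U'U: "U' \<subseteq> U" by (auto simp: U'_def)
    have eU': "e \<notin> U'" using Fee by (simp add: U'_def)
    have sp1: "span U' = U'" using subU' by simp
    have sp2: "span U = U" using sub by simp
    have psub: "U' \<subset> U" using U'U eU eU' by auto
    have "span U' \<subset> span U" using psub by (metis sp1 sp2)
    then have "dim U' < dim U" by (rule dim_psubset)
    then obtain S' where S': "onb F U' S'" "card S' = dim U'"
      using less.IH[of "dim U'" U'] less.prems subU' U'U by (auto simp: subset_iff)
    have finS': "finite S'" using S' by (simp add: onb_def)
    have eS': "e \<notin> S'" using S' eU' by (auto simp: onb_def)
    have S'U': "S' \<subseteq> U'" using S' by (simp add: onb_def)
    define S where "S = insert e S'"
    have decomp: "y - F y e *\<^sub>R e \<in> U'" if "y \<in> U" for y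
    proof -
      have "F e y = F y e" using less.prems that eU by auto
      then show ?thesis
        using that eU sub Fee
        by (simp add: U'_def subspace_diff subspace_scale linear_diff[OF linFe] linear_scale[OF linFe])
    qed
    have onS: "onb F U S"
      unfolding onb_def
    proof (intro conjI ballI)
      show "finite S" using finS' by (simp add: S_def)
      show "S \<subseteq> U" using S'U' U'U eU by (auto simp: S_def)
    next
      fix a b assume ab: "a \<in> S" "b \<in> S"
      show "F a b = (if a = b then 1 else 0)"
      proof (cases "a = e")
        case True
        then show ?thesis
        proof (cases "b = e")
          case False
          then have "b \<in> U'" using ab S'U' by (auto simp: S_def)
          then show ?thesis using True False by (simp add: U'_def)
        qed (simp add: Fee)
      next
        case False
        then have aU': "a \<in> S'" using ab by (auto simp: S_def)
        show ?thesis
        proof (cases "b = e")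
          case True
          have "a \<in> U'" using aU' S'U' by auto
          then have "F e a = 0" by (simp add: U'_def)
          moreover have "F a e = F e a" using less.prems \<open>a \<in> U'\<close> U'U eU by auto
          ultimately show ?thesis using True False by simp
        next
          case False
          then have "b \<in> S'" using ab by (auto simp: S_def)
          then show ?thesis using aU' S' by (auto simp: onb_def)
        qed
      qed
    next
      fix y assume y: "y \<in> U"
      define y' where "y' = y - F y e *\<^sub>R e"
      have y'U': "y' \<in> U'" using decomp[OF y] by (simp add: y'_def)
      have rep': "y' = (\<Sum>a\<in>S'. F y' a *\<^sub>R a)" using S' y'U' by (auto simp: onb_def)
      have co: "F y' a = F y a" if "a \<in> S'" for a
      proof -
        have "a \<in> U'" using that S'U' by auto
        then have "F e a = 0" by (simp add: U'_def)
        then show ?thesis by (simp add: y'_def bilinear_lsub[OF bil] bilinear_lmul[OF bil])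
      qed
      have "y = F y e *\<^sub>R e + y'" by (simp add: y'_def)
      also have "\<dots> = F y e *\<^sub>R e + (\<Sum>a\<in>S'. F y a *\<^sub>R a)"
        using rep' co by (metis (no_types, lifting) sum.cong)
      also have "\<dots> = (\<Sum>a\<in>S. F y a *\<^sub>R a)"
        using finS' eS' by (simp add: S_def)
      finally show "y = (\<Sum>a\<in>S. F y a *\<^sub>R a)" .
    qed
    have "span (insert e U') = U"
    proof
      show "span (insert e U') \<subseteq> U" using span_minimal[of "insert e U'" U] sub eU U'U by auto
      show "U \<subseteq> span (insert e U')"
      proof
        fix y assume y: "y \<in> U"
        have "y = F y e *\<^sub>R e + (y - F y e *\<^sub>R e)" by simp
        moreover have "F y e *\<^sub>R e \<in> span (insert e U')" by (simp add: span_base span_scale)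
        moreover have "y - F y e *\<^sub>R e \<in> span (insert e U')"
          using decomp[OF y] by (simp add: span_base)
        ultimately show "y \<in> span (insert e U')" by (metis span_add)
      qed
    qed
    then have "dim U = dim (insert e U')" by (metis dim_span)
    also have "\<dots> = dim U' + 1"
      using eU' sp1 by (metis dim_insert)
    finally have "card S = dim U" using S' finS' eS' by (simp add: S_def)
    then show ?thesis using onS by blast
  qed
qed

lemma gram_schmidt:
  fixes F :: "'g::euclidean_space \<Rightarrow> 'g \<Rightarrow> real"
  assumes "bilinear F" "subspace U" "\<forall>x\<in>U. \<forall>y\<in>U. F x y = F y x"
    "\<forall>x\<in>U. x \<noteq> 0 \<longrightarrow> F x x > 0"
  shows "\<exists>S. onb F U S \<and> card S = dim U"
  using gs_aux[OF assms(1) refl] assms by blast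


locale lie =
  fixes br :: "'g::euclidean_space \<Rightarrow> 'g \<Rightarrow> 'g"
  assumes lie: "lie_algebra br"
begin

lemma lin_r: "linear (br x)" using lie unfolding lie_algebra_def by blast
lemma lin_l: "linear (\<lambda>x. br x y)" using lie unfolding lie_algebra_def by blast
lemma bil: "bilinear br" using lin_r lin_l by (simp add: bilinear_def)
lemma anti: "br x y = - br y x" using lie unfolding lie_algebra_def by blast
lemma br_self[simp]: "br x x = 0"
proof -
  have "br x x + br x x = 0" using anti[of x x] by (metis eq_neg_iff_add_eq_0)
  then have "2 *\<^sub>R br x x = 0" by (simp add: scaleR_2)
  then show ?thesis by simp
qed
lemma jac0: "br x (br y z) + br y (br z x) + br z (br x y) = 0"
  using lie unfolding lie_algebra_def by blast
lemma jac: "br x (br y z) = br (br x y) z + br y (br x z)"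
proof -
  have "br x (br y z) = - br y (br z x) - br z (br x y)" using jac0[of x y z]
    by (simp add: algebra_simps eq_neg_iff_add_eq_0)
  also have "\<dots> = br y (br x z) + br (br x y) z"
    using anti[of z x] anti[of z "br x y"] linear_neg[OF lin_r[of y]] by simp
  finally show ?thesis by simp
qed
lemma ad_br: "br (br x y) w = br x (br y w) - br y (br x w)"
  using jac[of x y w] by simp

lemmas br_simps = bilinear_ladd[OF bil] bilinear_radd[OF bil] bilinear_lmul[OF bil]
  bilinear_rmul[OF bil] bilinear_lsub[OF bil] bilinear_rsub[OF bil]
  bilinear_lneg[OF bil] bilinear_rneg[OF bil] bilinear_lzero[OF bil] bilinear_rzero[OF bil]

lemma br_lsum: "br (\<Sum>i\<in>I. f i) y = (\<Sum>i\<in>I. br (f i) y)"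
  by (rule linear_sum[OF lin_l])
lemma br_rsum: "br x (\<Sum>i\<in>I. f i) = (\<Sum>i\<in>I. br x (f i))"
  by (rule linear_sum[OF lin_r])

lemma lin_ad2: "linear (\<lambda>v. br x (br y v))"
  using linear_compose[OF lin_r[of y] lin_r[of x]] by (simp add: o_def)

lemma kill_bil: "bilinear (killing br)"
proof -
  have "linear (\<lambda>x. killing br x y)" for y
    unfolding killing_def
    by (rule linearI) (simp_all add: bilinear_ladd[OF bil] bilinear_lmul[OF bil] trace_end_add trace_end_scale)
  moreover have "linear (\<lambda>y. killing br x y)" for x
  proof (rule linearI)
    fix y1 y2 c
    show "killing br x (y1 + y2) = killing br x y1 + killing br x y2"
      unfolding killing_def bilinear_ladd[OF bil] bilinear_radd[OF bil] by (rule trace_end_add)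
    show "killing br x (c *\<^sub>R y1) = c *\<^sub>R killing br x y1"
      unfolding killing_def bilinear_lmul[OF bil] bilinear_rmul[OF bil] by (simp add: trace_end_scale)
  qed
  ultimately show ?thesis by (simp add: bilinear_def)
qed

lemmas kill_simps = bilinear_ladd[OF kill_bil] bilinear_radd[OF kill_bil] bilinear_lmul[OF kill_bil]
  bilinear_rmul[OF kill_bil] bilinear_lsub[OF kill_bil] bilinear_rsub[OF kill_bil]
  bilinear_lneg[OF kill_bil] bilinear_rneg[OF kill_bil] bilinear_lzero[OF kill_bil] bilinear_rzero[OF kill_bil]

lemma kill_lin_l: "linear (\<lambda>x. killing br x y)" using kill_bil by (simp add: bilinear_def)
lemma kill_lin_r: "linear (\<lambda>y. killing br x y)" using kill_bil by (simp add: bilinear_def)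

lemma kill_sym: "killing br x y = killing br y x"
  unfolding killing_def using trace_end_cyclic[OF lin_r[of x] lin_r[of y]] by simp

lemma kill_inv: "killing br (br x y) z = - killing br y (br x z)"
proof -
  have e1: "killing br (br x y) z = trace_end (\<lambda>v. br x (br y (br z v))) - trace_end (\<lambda>v. br y (br x (br z v)))"
    unfolding killing_def ad_br by (rule trace_end_diff)
  have e2: "killing br y (br x z) = trace_end (\<lambda>v. br y (br x (br z v))) - trace_end (\<lambda>v. br y (br z (br x v)))"
    unfolding killing_def ad_br br_simps by (rule trace_end_diff)
  have "trace_end (\<lambda>v. br x (br y (br z v))) = trace_end (\<lambda>v. br y (br z (br x v)))"
    using trace_end_cyclic[OF lin_r[of x] lin_ad2[of y z]] by simp
  then show ?thesis using e1 e2 by simp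
qed

lemma kill_inv2: "killing br (br x y) z = killing br x (br y z)"
  using kill_inv[of y x z] anti[of x y] kill_simps by simp

end


locale diag = lie br for br :: "'g::euclidean_space \<Rightarrow> 'g \<Rightarrow> 'g" +
  fixes Q :: "'g \<Rightarrow> 'g \<Rightarrow> real" and E :: "'g set" and lam :: "'g \<Rightarrow> real"
  assumes Qbil: "bilinear Q" and Qsym: "Q x y = Q y x" and onbE: "onb Q UNIV E"
    and lampos: "a \<in> E \<Longrightarrow> lam a > 0"
begin

definition "gm x y = (\<Sum>a\<in>E. lam a * Q x a * Q y a)"

lemma finE: "finite E" using onbE by (simp add: onb_def)
lemma repE: "x = (\<Sum>a\<in>E. Q x a *\<^sub>R a)" using onbE by (simp add: onb_def)
lemma repE': "(\<Sum>a\<in>E. Q x a *\<^sub>R a) = x" by (rule repE[symmetric])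
lemma QE: "a \<in> E \<Longrightarrow> b \<in> E \<Longrightarrow> Q a b = (if a = b then 1 else 0)" using onbE by (simp add: onb_def)
lemma coeffE: "b \<in> E \<Longrightarrow> Q (\<Sum>a\<in>E. c a *\<^sub>R a) b = c b" by (rule onb_coeff[OF onbE Qbil])

lemmas Q_simps = bilinear_ladd[OF Qbil] bilinear_radd[OF Qbil] bilinear_lmul[OF Qbil]
  bilinear_rmul[OF Qbil] bilinear_lsub[OF Qbil] bilinear_rsub[OF Qbil]
  bilinear_lneg[OF Qbil] bilinear_rneg[OF Qbil] bilinear_lzero[OF Qbil] bilinear_rzero[OF Qbil]

lemma Qlin_l: "linear (\<lambda>x. Q x y)" using Qbil by (simp add: bilinear_def)
lemma Qlin_r: "linear (\<lambda>y. Q x y)" using Qbil by (simp add: bilinear_def)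

lemma Q_expand: "Q x y = (\<Sum>a\<in>E. Q y a * Q x a)"
proof -
  have "Q x y = Q x (\<Sum>a\<in>E. Q y a *\<^sub>R a)" by (simp add: repE')
  also have "\<dots> = (\<Sum>a\<in>E. Q x (Q y a *\<^sub>R a))" by (rule linear_sum[OF Qlin_r])
  finally show ?thesis by (simp add: Q_simps)
qed

lemma gm_bil: "bilinear gm"
proof -
  have "linear (\<lambda>x. gm x y)" for y
    by (rule linearI) (simp_all add: gm_def Q_simps distrib_left distrib_right sum.distrib sum_distrib_left mult_ac)
  moreover have "linear (\<lambda>y. gm x y)" for x
    by (rule linearI) (simp_all add: gm_def Q_simps distrib_left distrib_right sum.distrib sum_distrib_left mult_ac)
  ultimately show ?thesis by (simp add: bilinear_def)
qed

lemma gm_lin_l: "linear (\<lambda>x. gm x y)" using gm_bil by (simp add: bilinear_def)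
lemma gm_lin_r: "linear (\<lambda>y. gm x y)" using gm_bil by (simp add: bilinear_def)

lemma gm_E: "b \<in> E \<Longrightarrow> gm w b = lam b * Q w b"
proof -
  assume b: "b \<in> E"
  have "gm w b = (\<Sum>a\<in>E. if a = b then lam b * Q w b else 0)"
    unfolding gm_def using b by (intro sum.cong) (auto simp: QE)
  then show ?thesis using finE b by simp
qed

lemma gm_E2: "b \<in> E \<Longrightarrow> gm b w = lam b * Q w b"
proof -
  assume b: "b \<in> E"
  have "gm b w = (\<Sum>a\<in>E. if a = b then lam b * Q w b else 0)"
    unfolding gm_def using b by (intro sum.cong) (auto simp: QE)
  then show ?thesis using finE b by simp
qed

lemma gm_unique: assumes "\<forall>w. gm z w = gm z' w" shows "z = z'"
proof -
  define d where "d = z - z'"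
  have "gm d d = 0" using assms by (simp add: d_def bilinear_lsub[OF gm_bil])
  then have "(\<Sum>a\<in>E. lam a * (Q d a)\<^sup>2) = 0" by (simp add: gm_def power2_eq_square mult.assoc)
  moreover have "\<forall>a\<in>E. lam a * (Q d a)\<^sup>2 \<ge> 0" using lampos by (simp add: less_imp_le)
  ultimately have h: "\<forall>a\<in>E. lam a * (Q d a)\<^sup>2 = 0"
    using sum_nonneg_eq_0_iff[OF finE, of "\<lambda>a. lam a * (Q d a)\<^sup>2"] by simp
  have "\<forall>a\<in>E. Q d a = 0"
  proof
    fix a assume a: "a \<in> E"
    then have "lam a \<noteq> 0" using lampos[OF a] by simp
    then show "Q d a = 0" using h a by auto
  qed
  then have "(\<Sum>a\<in>E. Q d a *\<^sub>R a) = 0" by simp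
  then have "d = 0" by (simp add: repE')
  then show ?thesis by (simp add: d_def)
qed

lemma the_gm:
  assumes "\<forall>w. gm z w = f w"
  shows "(THE z. \<forall>w. gm z w = f w) = z"
proof (rule the_equality)
  show "\<forall>w. gm z w = f w" by (rule assms)
  fix z' assume "\<forall>w. gm z' w = f w"
  then have "\<forall>w. gm z' w = gm z w" using assms by simp
  then show "z' = z" by (rule gm_unique)
qed

lemma rep_functional:
  assumes lin: "linear f"
  shows "\<forall>w. gm (\<Sum>c\<in>E. (f c / lam c) *\<^sub>R c) w = f w"
proof
  fix w
  have "gm (\<Sum>c\<in>E. (f c / lam c) *\<^sub>R c) w = (\<Sum>a\<in>E. lam a * (f a / lam a) * Q w a)"
    unfolding gm_def by (intro sum.cong) (auto simp: coeffE)
  also have "\<dots> = (\<Sum>a\<in>E. Q w a * f a)"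
  proof (rule sum.cong[OF refl])
    fix a assume a: "a \<in> E"
    then have "lam a \<noteq> 0" using lampos[OF a] by simp
    then show "lam a * (f a / lam a) * Q w a = Q w a * f a" by simp
  qed
  also have "\<dots> = (\<Sum>a\<in>E. f (Q w a *\<^sub>R a))" by (simp add: linear_scale[OF lin])
  also have "\<dots> = f (\<Sum>a\<in>E. Q w a *\<^sub>R a)" by (rule linear_sum[OF lin, symmetric])
  also have "\<dots> = f w" by (simp add: repE')
  finally show "gm (\<Sum>c\<in>E. (f c / lam c) *\<^sub>R c) w = f w" .
qed

lemma tr_wrt_E:
  assumes T: "bilinear T"
  shows "tr_wrt gm T = (\<Sum>a\<in>E. T a a / lam a)"
proof -
  define Z where "Z x = (\<Sum>c\<in>E. (T x c / lam c) *\<^sub>R c)" for x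
  have "(THE z. \<forall>w. gm z w = T x w) = Z x" for x
    unfolding Z_def
    by (rule the_gm, rule rep_functional) (use T in \<open>simp add: bilinear_def\<close>)
  then have "tr_wrt gm T = trace_end Z" by (simp add: tr_wrt_def)
  also have "\<dots> = (\<Sum>a\<in>E. Q (Z a) a)"
  proof (rule trace_onb[OF onbE])
    show "linear Z" unfolding Z_def
      by (rule linearI) (simp_all add: bilinear_ladd[OF T] bilinear_lmul[OF T] add_divide_distrib
          scaleR_add_left sum.distrib scaleR_sum_right)
    show "\<And>y. linear (\<lambda>x. Q x y)" by (rule Qlin_l)
  qed
  also have "\<dots> = (\<Sum>a\<in>E. T a a / lam a)" unfolding Z_def by (intro sum.cong) (auto simp: coeffE)
  finally show ?thesis .
qed

lemma adj_formula: "adj gm br x y = (\<Sum>c\<in>E. (gm y (br x c) / lam c) *\<^sub>R c)"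
proof -
  have lin: "linear (\<lambda>w. gm y (br x w))"
    using linear_compose[OF lin_r gm_lin_r] by (simp add: o_def)
  show ?thesis unfolding adj_def by (rule the_gm[OF rep_functional[OF lin]])
qed

lemma adj_bil: "bilinear (adj gm br)"
  unfolding bilinear_def adj_formula
  by (simp add: linear_iff bilinear_ladd[OF gm_bil] bilinear_lmul[OF gm_bil] br_simps
      bilinear_radd[OF gm_bil] bilinear_rmul[OF gm_bil] add_divide_distrib
      scaleR_add_left sum.distrib scaleR_sum_right)

lemma lc_bil: "bilinear (levi_civita gm br)"
proof -
  have a: "bilinear (adj gm br)" by (rule adj_bil)
  show ?thesis unfolding bilinear_def levi_civita_def
    by (simp add: linear_iff br_simps bilinear_ladd[OF a] bilinear_lmul[OF a]
        bilinear_radd[OF a] bilinear_rmul[OF a] algebra_simps)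
qed

lemmas lc_simps = bilinear_ladd[OF lc_bil] bilinear_radd[OF lc_bil] bilinear_lmul[OF lc_bil]
  bilinear_rmul[OF lc_bil] bilinear_lsub[OF lc_bil] bilinear_rsub[OF lc_bil]
  bilinear_lneg[OF lc_bil] bilinear_rneg[OF lc_bil] bilinear_lzero[OF lc_bil] bilinear_rzero[OF lc_bil]

lemma lc_lin_l: "linear (\<lambda>x. levi_civita gm br x y)" using lc_bil by (simp add: bilinear_def)
lemma lc_lin_r: "linear (\<lambda>y. levi_civita gm br x y)" using lc_bil by (simp add: bilinear_def)

lemma curv_lin1: "linear (\<lambda>x. curv gm br x y w)"
  unfolding curv_def by (simp add: linear_iff lc_simps br_simps algebra_simps)

lemma curv_lin2: "linear (\<lambda>y. curv gm br x y w)"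
  unfolding curv_def by (simp add: linear_iff lc_simps br_simps algebra_simps)

lemma curv_lin3: "linear (\<lambda>w. curv gm br x y w)"
  unfolding curv_def by (simp add: linear_iff lc_simps br_simps algebra_simps)

definition "CC a b c = Q (br a b) c"
definition "GG a b c = (CC a b c - (lam b / lam c) * CC a c b - (lam a / lam c) * CC b c a) / 2"

lemma br_E: "br a b = (\<Sum>c\<in>E. CC a b c *\<^sub>R c)"
  unfolding CC_def by (rule repE)

lemma adj_E: "a \<in> E \<Longrightarrow> b \<in> E \<Longrightarrow> adj gm br a b = (\<Sum>c\<in>E. ((lam b / lam c) * CC a c b) *\<^sub>R c)"
  unfolding adj_formula by (intro sum.cong) (auto simp: gm_E2 CC_def)

lemma lc_E: assumes "a \<in> E" "b \<in> E" shows "levi_civita gm br a b = (\<Sum>c\<in>E. GG a b c *\<^sub>R c)"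
proof -
  have "br a b - adj gm br a b - adj gm br b a =
      (\<Sum>c\<in>E. (CC a b c - (lam b / lam c) * CC a c b - (lam a / lam c) * CC b c a) *\<^sub>R c)"
    unfolding adj_E[OF assms] adj_E[OF assms(2,1)] br_E[of a b]
    by (simp only: scaleR_diff_left sum_subtractf)
  then have "levi_civita gm br a b = (1/2) *\<^sub>R (\<Sum>c\<in>E. (CC a b c - (lam b / lam c) * CC a c b - (lam a / lam c) * CC b c a) *\<^sub>R c)"
    by (simp add: levi_civita_def)
  also have "\<dots> = (\<Sum>c\<in>E. GG a b c *\<^sub>R c)"
    by (simp only: scaleR_sum_right scaleR_scaleR GG_def) (simp add: mult.commute)
  finally show ?thesis .
qed

lemma lc_lsum: "levi_civita gm br (\<Sum>d\<in>E. f d *\<^sub>R d) y = (\<Sum>d\<in>E. f d *\<^sub>R levi_civita gm br d y)"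
  by (simp add: linear_sum[OF lc_lin_l] lc_simps)
lemma lc_rsum: "levi_civita gm br x (\<Sum>d\<in>E. f d *\<^sub>R d) = (\<Sum>d\<in>E. f d *\<^sub>R levi_civita gm br x d)"
  by (simp add: linear_sum[OF lc_lin_r] lc_simps)

lemma swap_helper: "(\<Sum>d\<in>E. f d *\<^sub>R (\<Sum>e\<in>E. h d e *\<^sub>R e)) = (\<Sum>e\<in>E. (\<Sum>d\<in>E. f d * h d e) *\<^sub>R e)"
proof -
  have "(\<Sum>d\<in>E. f d *\<^sub>R (\<Sum>e\<in>E. h d e *\<^sub>R e)) = (\<Sum>d\<in>E. \<Sum>e\<in>E. (f d * h d e) *\<^sub>R e)"
    by (simp add: scaleR_sum_right)
  also have "\<dots> = (\<Sum>e\<in>E. \<Sum>d\<in>E. (f d * h d e) *\<^sub>R e)" by (rule sum.swap)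
  also have "\<dots> = (\<Sum>e\<in>E. (\<Sum>d\<in>E. f d * h d e) *\<^sub>R e)" by (simp add: scaleR_sum_left)
  finally show ?thesis .
qed

lemma curv_E:
  assumes a: "a \<in> E" and b: "b \<in> E" and c: "c \<in> E"
  shows "Q (curv gm br a b c) a =
    (\<Sum>d\<in>E. GG b c d * GG a d a - GG a c d * GG b d a - CC a b d * GG d c a)"
proof -
  have t1: "Q (levi_civita gm br a (levi_civita gm br b c)) a = (\<Sum>d\<in>E. GG b c d * GG a d a)"
  proof -
    have "levi_civita gm br a (levi_civita gm br b c) = (\<Sum>d\<in>E. GG b c d *\<^sub>R (\<Sum>e\<in>E. GG a d e *\<^sub>R e))"
      unfolding lc_E[OF b c] lc_rsum using a by (intro sum.cong) (auto simp: lc_E)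
    also have "\<dots> = (\<Sum>e\<in>E. (\<Sum>d\<in>E. GG b c d * GG a d e) *\<^sub>R e)"
      by (rule swap_helper)
    finally show ?thesis using a by (simp add: coeffE)
  qed
  have t2: "Q (levi_civita gm br b (levi_civita gm br a c)) a = (\<Sum>d\<in>E. GG a c d * GG b d a)"
  proof -
    have "levi_civita gm br b (levi_civita gm br a c) = (\<Sum>d\<in>E. GG a c d *\<^sub>R (\<Sum>e\<in>E. GG b d e *\<^sub>R e))"
      unfolding lc_E[OF a c] lc_rsum using b by (intro sum.cong) (auto simp: lc_E)
    also have "\<dots> = (\<Sum>e\<in>E. (\<Sum>d\<in>E. GG a c d * GG b d e) *\<^sub>R e)"
      by (rule swap_helper)
    finally show ?thesis using a by (simp add: coeffE)
  qed
  have t3: "Q (levi_civita gm br (br a b) c) a = (\<Sum>d\<in>E. CC a b d * GG d c a)"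
  proof -
    have "levi_civita gm br (br a b) c = (\<Sum>d\<in>E. CC a b d *\<^sub>R (\<Sum>e\<in>E. GG d c e *\<^sub>R e))"
      unfolding br_E[of a b] lc_lsum using c by (intro sum.cong) (auto simp: lc_E)
    also have "\<dots> = (\<Sum>e\<in>E. (\<Sum>d\<in>E. CC a b d * GG d c e) *\<^sub>R e)"
      by (rule swap_helper)
    finally show ?thesis using a by (simp add: coeffE)
  qed
  show ?thesis unfolding curv_def Q_simps t1 t2 t3 by (simp add: sum_subtractf)
qed

lemma ricci_bil: "bilinear (ricci gm br)"
proof -
  have "ricci gm br y w = (\<Sum>a\<in>E. Q (curv gm br a y w) a)" for y w
    unfolding ricci_def by (rule trace_onb[OF onbE curv_lin1 Qlin_l])
  then show ?thesis
    unfolding bilinear_def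
    by (simp add: linear_iff linear_add[OF curv_lin2] linear_scale[OF curv_lin2]
        linear_add[OF curv_lin3] linear_scale[OF curv_lin3] Q_simps sum.distrib sum_distrib_left)
qed

lemma scal_E:
  "scal gm br = (\<Sum>b\<in>E. (\<Sum>a\<in>E. \<Sum>d\<in>E. GG b b d * GG a d a - GG a b d * GG b d a - CC a b d * GG d b a) / lam b)"
proof -
  have "scal gm br = (\<Sum>b\<in>E. ricci gm br b b / lam b)"
    unfolding scal_def by (rule tr_wrt_E[OF ricci_bil])
  also have "\<dots> = (\<Sum>b\<in>E. (\<Sum>a\<in>E. \<Sum>d\<in>E. GG b b d * GG a d a - GG a b d * GG b d a - CC a b d * GG d b a) / lam b)"
  proof (rule sum.cong[OF refl])
    fix b assume b: "b \<in> E"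
    have "ricci gm br b b = (\<Sum>a\<in>E. Q (curv gm br a b b) a)"
      unfolding ricci_def by (rule trace_onb[OF onbE curv_lin1 Qlin_l])
    also have "\<dots> = (\<Sum>a\<in>E. \<Sum>d\<in>E. GG b b d * GG a d a - GG a b d * GG b d a - CC a b d * GG d b a)"
      using b by (intro sum.cong) (auto simp: curv_E)
    finally show "ricci gm br b b / lam b = (\<Sum>a\<in>E. \<Sum>d\<in>E. GG b b d * GG a d a - GG a b d * GG b d a - CC a b d * GG d b a) / lam b"
      by simp
  qed
  finally show ?thesis .
qed

end


context diag begin

definition "ff1 eps a b d = 1 + (lam b / lam d) * (eps b * eps d) - (lam a / lam d) * (eps a * eps d)"
definition "ff2 eps a b d = eps a * eps d + lam d / lam a - (lam b / lam a) * (eps b * eps d)"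
definition "ff3 eps a b d = - (eps a * eps d) - (lam b / lam a) * (eps b * eps d) + lam d / lam a"

lemma phi_pointwise:
  assumes R2: "\<And>a b d. a \<in> E \<Longrightarrow> b \<in> E \<Longrightarrow> d \<in> E \<Longrightarrow> CC a b d = - (eps b * eps d) * CC a d b"
    and a: "a \<in> E" and b: "b \<in> E" and d: "d \<in> E"
  shows "GG b b d * GG a d a - GG a b d * GG b d a - CC a b d * GG d b a
       = (CC a b d)\<^sup>2 * (- ff1 eps a b d * ff2 eps a b d / 4 - ff3 eps a b d / 2)"
proof -
  define C where "C = CC a b d"
  have R1: "CC x y w = - CC y x w" for x y w unfolding CC_def using anti[of x y] by (simp add: Q_simps)
  have e1: "CC a d b = - (eps b * eps d) * C" using R2[OF a d b] by (simp add: C_def mult.commute)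
  have e2: "CC b d a = eps a * eps d * C" using R2[OF b d a] R1[of b a d] by (simp add: C_def mult.commute)
  have e3: "CC b a d = - C" using R1[of b a d] by (simp add: C_def)
  have e4: "CC d a b = eps b * eps d * C" using R1[of d a b] e1 by simp
  have e5: "CC d b a = - (eps a * eps d) * C" using R1[of d b a] e2 by simp
  have e6: "CC b b d = 0" by (simp add: CC_def Q_simps)
  have e7: "CC b d b = 0" using R2[OF b d b] e6 by simp
  have g0: "GG b b d = 0" by (simp add: GG_def e6 e7)
  have g1: "GG a b d = C * ff1 eps a b d / 2"
    unfolding GG_def ff1_def e1 e2 C_def[symmetric] by (simp add: algebra_simps)
  have g2: "GG b d a = C * ff2 eps a b d / 2"
    unfolding GG_def ff2_def e2 e3 e4 by (simp add: algebra_simps)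
  have g3: "GG d b a = C * ff3 eps a b d / 2"
    unfolding GG_def ff3_def e5 e4 e3 by (simp add: algebra_simps)
  show ?thesis unfolding g0 g1 g2 g3 C_def[symmetric] by (simp add: power2_eq_square algebra_simps)
qed

lemma scal_W:
  assumes R2: "\<And>a b d. a \<in> E \<Longrightarrow> b \<in> E \<Longrightarrow> d \<in> E \<Longrightarrow> CC a b d = - (eps b * eps d) * CC a d b"
  shows "scal gm br = (\<Sum>b\<in>E. \<Sum>a\<in>E. \<Sum>d\<in>E.
     (CC a b d)\<^sup>2 * ((- ff1 eps a b d * ff2 eps a b d / 4 - ff3 eps a b d / 2) / lam b))"
  unfolding scal_E
  by (intro sum.cong refl) (simp add: phi_pointwise[OF R2] sum_divide_distrib)

end


locale cs = lie br for br :: "'g::euclidean_space \<Rightarrow> 'g \<Rightarrow> 'g" +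
  fixes k :: "'g set" and ks :: "nat \<Rightarrow> 'g set" and r m :: nat
  assumes simp_g: "simple_lie br UNIV" and nonc: "noncompact_lie br"
    and cart: "cartan_subalg br k" and kdec: "k_decomp br k ks r m"
begin

abbreviation "B \<equiv> killing br"
abbreviation "p \<equiv> kperp br k"
abbreviation "K \<equiv> projk br k"
abbreviation "Q \<equiv> Qform br k"

lemma sub_k: "subspace k" using cart by (simp add: cartan_subalg_def)
lemma k_br: "x \<in> k \<Longrightarrow> y \<in> k \<Longrightarrow> br x y \<in> k" using cart by (simp add: cartan_subalg_def)
lemma k_neg: "x \<in> k \<Longrightarrow> x \<noteq> 0 \<Longrightarrow> B x x < 0" using cart by (simp add: cartan_subalg_def)
lemma p_br: "x \<in> p \<Longrightarrow> y \<in> p \<Longrightarrow> br x y \<in> k" using cart by (simp add: cartan_subalg_def)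
lemma p_pos: "x \<in> p \<Longrightarrow> x \<noteq> 0 \<Longrightarrow> B x x > 0" using cart by (simp add: cartan_subalg_def)
lemma p_iff: "x \<in> p \<longleftrightarrow> (\<forall>y\<in>k. B x y = 0)" by (simp add: kperp_def)
lemma sub_p: "subspace p"
  unfolding subspace_def kperp_def by (auto simp: kill_simps)
lemma kp_orth: "x \<in> k \<Longrightarrow> y \<in> p \<Longrightarrow> B x y = 0"
  using kill_sym p_iff by metis
lemma pk_orth: "x \<in> k \<Longrightarrow> y \<in> p \<Longrightarrow> B y x = 0"
  using p_iff by metis

lemma negB_bil: "bilinear (\<lambda>x y. - B x y)"
  using bilinear_cmult[OF kill_bil, of "-1"] by simp

definition "Sk = (SOME S. onb (\<lambda>x y. - B x y) k S \<and> card S = dim k)"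

lemma Sk: "onb (\<lambda>x y. - B x y) k Sk"
proof -
  have "\<exists>S. onb (\<lambda>x y. - B x y) k S \<and> card S = dim k"
    by (rule gram_schmidt[OF negB_bil sub_k]) (auto simp: kill_sym dest: k_neg)
  then show ?thesis unfolding Sk_def by (metis (mono_tags, lifting) someI_ex)
qed

lemma K_char: assumes "u \<in> k" "x - u \<in> p" shows "K x = u"
proof -
  have ex: "u \<in> k \<and> (\<forall>w\<in>k. B (x - u) w = 0)" using assms p_iff by blast
  have "(THE u. u \<in> k \<and> (\<forall>w\<in>k. B (x - u) w = 0)) = u"
  proof (rule the_equality)
    show "u \<in> k \<and> (\<forall>w\<in>k. B (x - u) w = 0)" by (rule ex)
    fix u' assume u': "u' \<in> k \<and> (\<forall>w\<in>k. B (x - u') w = 0)"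
    show "u' = u"
      by (rule proj_unique[OF sub_k kill_bil, of u' x u]) (use u' ex k_neg in force)+
  qed
  then show ?thesis by (simp add: projk_def)
qed

lemma K_ex: "K x \<in> k \<and> x - K x \<in> p"
proof -
  define u where "u = (\<Sum>a\<in>Sk. - B x a *\<^sub>R a)"
  have "u \<in> k" "\<forall>w\<in>k. - B (x - u) w = 0"
    using onb_proj[OF Sk negB_bil _ sub_k, of x] kill_sym unfolding u_def by auto
  then have "u \<in> k" "x - u \<in> p" using p_iff by auto
  then show ?thesis using K_char by simp
qed

lemma K_in: "K x \<in> k" using K_ex by blast
lemma P_in: "x - K x \<in> p" using K_ex by blast
lemma K_k: "x \<in> k \<Longrightarrow> K x = x" by (rule K_char) (auto simp: subspace_0[OF sub_p])
lemma K_p: "x \<in> p \<Longrightarrow> K x = 0" by (rule K_char) (auto simp: subspace_0[OF sub_k])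

lemma K_lin: "linear K"
proof (rule linearI)
  fix x y :: 'g and c :: real
  show "K (x + y) = K x + K y"
  proof (rule K_char)
    show "K x + K y \<in> k" using K_in sub_k by (simp add: subspace_add)
    have "x + y - (K x + K y) = (x - K x) + (y - K y)" by simp
    then show "x + y - (K x + K y) \<in> p" using P_in sub_p by (metis subspace_add)
  qed
  show "K (c *\<^sub>R x) = c *\<^sub>R K x"
  proof (rule K_char)
    show "c *\<^sub>R K x \<in> k" using K_in sub_k by (simp add: subspace_scale)
    have "c *\<^sub>R x - c *\<^sub>R K x = c *\<^sub>R (x - K x)" by (simp add: algebra_simps)
    then show "c *\<^sub>R x - c *\<^sub>R K x \<in> p" using P_in sub_p by (metis subspace_scale)
  qed
qed

lemmas K_simps = linear_add[OF K_lin] linear_scale[OF K_lin] linear_diff[OF K_lin]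
  linear_neg[OF K_lin] linear_0[OF K_lin]

lemma kp_zero: "x \<in> k \<Longrightarrow> x \<in> p \<Longrightarrow> x = 0"
  using K_k K_p by force

lemma kp_br: assumes "x \<in> k" "e \<in> p" shows "br x e \<in> p"
proof -
  have "B (br x e) y = 0" if "y \<in> k" for y
    using kill_inv[of x e y] k_br[OF assms(1) that] pk_orth assms(2) by simp
  then show ?thesis using p_iff by blast
qed

lemma pk_br: "x \<in> k \<Longrightarrow> e \<in> p \<Longrightarrow> br e x \<in> p"
  using kp_br anti[of e x] subspace_neg[OF sub_p] by fastforce

lemma K_br_k: "x \<in> k \<Longrightarrow> K (br x w) = br x (K w)"
proof (rule K_char)
  assume x: "x \<in> k"
  show "br x (K w) \<in> k" using x K_in k_br by blast
  have "br x w - br x (K w) = br x (w - K w)" by (simp add: br_simps)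
  then show "br x w - br x (K w) \<in> p" using kp_br[OF x P_in] by simp
qed

lemma K_br_p: "e \<in> p \<Longrightarrow> K (br e w) = br e (w - K w)"
proof (rule K_char)
  assume e: "e \<in> p"
  show "br e (w - K w) \<in> k" using e P_in p_br by blast
  have "br e w - br e (w - K w) = br e (K w)" by (simp add: br_simps)
  then show "br e w - br e (w - K w) \<in> p" using pk_br[OF K_in e] by simp
qed

lemma Q_def': "Q x y = B (x - K x) (y - K y) - B (K x) (K y)"
  by (simp add: Qform_def)

lemma Q_bil: "bilinear Q"
  unfolding bilinear_def Q_def'
  by (simp add: linear_iff K_simps kill_simps algebra_simps)

lemmas Q_simps = bilinear_ladd[OF Q_bil] bilinear_radd[OF Q_bil] bilinear_lmul[OF Q_bil]
  bilinear_rmul[OF Q_bil] bilinear_lsub[OF Q_bil] bilinear_rsub[OF Q_bil]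
  bilinear_lneg[OF Q_bil] bilinear_rneg[OF Q_bil] bilinear_lzero[OF Q_bil] bilinear_rzero[OF Q_bil]

lemma Q_sym: "Q x y = Q y x" by (simp add: Q_def' kill_sym)

lemma Q_pos: "x \<noteq> 0 \<Longrightarrow> Q x x > 0"
proof -
  assume x: "x \<noteq> 0"
  have a: "B (x - K x) (x - K x) \<ge> 0" using p_pos[OF P_in, of x] by (cases "x - K x = 0") (auto simp: kill_simps)
  have b: "B (K x) (K x) \<le> 0" using k_neg[OF K_in, of x] by (cases "K x = 0") (auto simp: kill_simps)
  show ?thesis
  proof (cases "K x = 0")
    case True
    then have "x - K x \<noteq> 0" using x by simp
    then have "B (x - K x) (x - K x) > 0" using p_pos[OF P_in] by blast
    then show ?thesis using b by (simp add: Q_def')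
  next
    case False
    then show ?thesis using k_neg[OF K_in, of x] a by (simp add: Q_def')
  qed
qed

lemma Q_p: "a \<in> p \<Longrightarrow> Q a y = B a y"
proof -
  assume a: "a \<in> p"
  have "B a (K y) = 0" using pk_orth[OF K_in a] .
  then show ?thesis using K_p[OF a] by (simp add: Q_def' kill_simps)
qed

lemma Q_k: "a \<in> k \<Longrightarrow> Q a y = - B a y"
proof -
  assume a: "a \<in> k"
  have "B a (y - K y) = 0" using kp_orth[OF a P_in] .
  then show ?thesis using K_k[OF a] by (simp add: Q_def' kill_simps)
qed

lemma Q_p2: "a \<in> p \<Longrightarrow> Q y a = B y a" using Q_p Q_sym kill_sym by metis
lemma Q_k2: "a \<in> k \<Longrightarrow> Q y a = - B y a" using Q_k Q_sym kill_sym by metis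

lemma Q_kp: "a \<in> k \<Longrightarrow> b \<in> p \<Longrightarrow> Q a b = 0"
  using Q_k kp_orth by simp

lemma skew_k:
  assumes x: "x \<in> k" shows "Q (br x w) c = - Q w (br x c)"
proof -
  have "Q (br x w) c = B (br x (w - K w)) (c - K c) - B (br x (K w)) (K c)"
    unfolding Q_def' K_br_k[OF x] by (simp add: br_simps)
  also have "\<dots> = - B (w - K w) (br x (c - K c)) + B (K w) (br x (K c))"
    by (simp add: kill_inv)
  also have "\<dots> = - Q w (br x c)"
    unfolding Q_def' K_br_k[OF x] by (simp add: br_simps)
  finally show ?thesis .
qed

lemma sym_p:
  assumes e: "e \<in> p" shows "Q (br e w) c = Q w (br e c)"
proof -
  have kw: "br e w - br e (w - K w) = br e (K w)" for w by (simp add: br_simps)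
  have "Q (br e w) c = B (br e (K w)) (c - K c) - B (br e (w - K w)) (K c)"
    unfolding Q_def' K_br_p[OF e] kw by simp
  also have "\<dots> = - B (K w) (br e (c - K c)) + B (w - K w) (br e (K c))"
    by (simp add: kill_inv)
  also have "\<dots> = Q w (br e c)"
    unfolding Q_def' K_br_p[OF e] kw by simp
  finally show ?thesis .
qed

lemma p_nonzero: "\<exists>e\<in>p. e \<noteq> 0"
proof -
  obtain x where x: "x \<noteq> 0" "\<not> B x x < 0" using nonc by (auto simp: noncompact_lie_def)
  show ?thesis
  proof (rule ccontr)
    assume "\<not> ?thesis"
    then have "x - K x = 0" using P_in by blast
    then have "x = K x" by simp
    then show False using k_neg[OF K_in, of x] x by metis
  qed
qed

end


lemma sub_ker: "linear f \<Longrightarrow> subspace {x. f x = (0::real)}"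
  by (auto simp: subspace_def linear_add linear_scale linear_0)

lemma sub_vimage: "linear f \<Longrightarrow> subspace W \<Longrightarrow> subspace {x. f x \<in> W}"
  by (auto simp: subspace_def linear_add linear_scale linear_0)

context cs begin

abbreviation "s \<equiv> derived br k"
abbreviation "z \<equiv> centre br k"

lemma s_gen: "x \<in> k \<Longrightarrow> y \<in> k \<Longrightarrow> br x y \<in> s"
  unfolding derived_def by (rule span_base) blast

lemma sub_s: "subspace s" by (simp add: derived_def)

lemma s_k: "s \<subseteq> k"
  unfolding derived_def using k_br sub_k by (intro span_minimal) auto

lemma sub_z: "subspace z"
  unfolding centre_def subspace_def using sub_k
  by (auto simp: br_simps subspace_def)

lemma z_k: "z \<subseteq> k" by (auto simp: centre_def)

lemma projU:
  assumes "subspace U" "U \<subseteq> k"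
  shows "\<exists>u\<in>U. \<forall>w\<in>U. B (x - u) w = 0"
proof -
  have "\<exists>S. onb (\<lambda>x y. - B x y) U S \<and> card S = dim U"
    by (rule gram_schmidt[OF negB_bil assms(1)]) (use assms(2) in \<open>auto simp: kill_sym dest: k_neg\<close>)
  then obtain S where S: "onb (\<lambda>x y. - B x y) U S" by blast
  from onb_proj[OF S negB_bil _ assms(1), of x] kill_sym show ?thesis by auto
qed

lemma negdef: "x \<in> k \<Longrightarrow> B x x = 0 \<Longrightarrow> x = 0"
  using k_neg by force

lemma k_split: assumes x: "x \<in> k" shows "\<exists>t\<in>s. x - t \<in> z"
proof -
  obtain t where t: "t \<in> s" "\<forall>w\<in>s. B (x - t) w = 0" using projU[OF sub_s s_k] by blast
  define w where "w = x - t"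
  have wk: "w \<in> k" using x t s_k sub_k by (auto simp: w_def subspace_diff)
  have "br w y = 0" if y: "y \<in> k" for y
  proof -
    have c: "br w y \<in> k" using k_br wk y by blast
    have "B (br w y) (br w y) = B w (br y (br w y))" by (rule kill_inv2)
    also have "\<dots> = 0" using t s_gen[OF y c] by (simp add: w_def)
    finally show ?thesis using negdef c by blast
  qed
  then have "w \<in> z" using wk by (auto simp: centre_def)
  then show ?thesis using t by (auto simp: w_def)
qed

lemma s_z_zero: assumes "x \<in> s" "x \<in> z" shows "x = 0"
proof -
  have "\<forall>w\<in>s. B x w = 0"
  proof
    fix w assume "w \<in> s"
    then show "B x w = 0" unfolding derived_def
    proof (rule span_induct[where P="\<lambda>w. B x w = 0"])
      show "subspace {w. B x w = 0}" by (rule sub_ker[OF kill_lin_r])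
      fix g assume "g \<in> {br a b |a b. a \<in> k \<and> b \<in> k}"
      then obtain a b where g: "g = br a b" "a \<in> k" "b \<in> k" by blast
      have "br x a = 0" using assms(2) g by (auto simp: centre_def)
      then show "B x g = 0" using kill_inv2[of x a b] g by (simp add: kill_simps)
    qed
  qed
  then show ?thesis using assms s_k negdef by blast
qed

lemma ideal_compl:
  assumes I: "lie_ideal_of br k I" and y: "y \<in> k"
  shows "\<exists>y1\<in>I. y - y1 \<in> k \<and> (\<forall>x\<in>I. br x (y - y1) = 0)"
proof -
  have subI: "subspace I" and Ik: "I \<subseteq> k" and Ibr: "\<And>a b. a \<in> k \<Longrightarrow> b \<in> I \<Longrightarrow> br a b \<in> I"
    using I by (auto simp: lie_ideal_of_def)
  obtain y1 where y1: "y1 \<in> I" "\<forall>w\<in>I. B (y - y1) w = 0" using projU[OF subI Ik] by blast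
  define y2 where "y2 = y - y1"
  have y2k: "y2 \<in> k" using y y1 Ik sub_k by (auto simp: y2_def subspace_diff)
  have "br x y2 = 0" if x: "x \<in> I" for x
  proof -
    have "br y2 x \<in> I" using Ibr[OF y2k x] .
    then have c: "br x y2 \<in> I" using anti[of x y2] subspace_neg[OF subI] by metis
    have "B (br x y2) (br x y2) = - B y2 (br x (br x y2))" by (rule kill_inv)
    also have "\<dots> = 0" using y1 Ibr[OF _ c, of x] x Ik by (auto simp: y2_def)
    finally show ?thesis using negdef c Ik by blast
  qed
  then show ?thesis using y1 y2k by (auto simp: y2_def)
qed

lemma simple_derived:
  assumes I: "lie_ideal_of br k I" and si: "simple_lie br I"
  shows "I = span {br a b |a b. a \<in> I \<and> b \<in> I}"
proof -
  have subI: "subspace I" and Ik: "I \<subseteq> k" and Ibr: "\<And>a b. a \<in> k \<Longrightarrow> b \<in> I \<Longrightarrow> br a b \<in> I"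
    using I by (auto simp: lie_ideal_of_def)
  define D where "D = span {br a b |a b. a \<in> I \<and> b \<in> I}"
  have DI: "D \<subseteq> I" unfolding D_def using Ibr Ik subI by (intro span_minimal) auto
  have "lie_ideal_of br I D"
    unfolding lie_ideal_of_def using DI by (auto simp: D_def intro!: span_base)
  moreover have "D \<noteq> {0}"
  proof -
    obtain a b where "a \<in> I" "b \<in> I" "br a b \<noteq> 0" using si by (auto simp: simple_lie_def)
    then have "br a b \<in> D" unfolding D_def by (intro span_base) blast
    then show ?thesis using \<open>br a b \<noteq> 0\<close> by blast
  qed
  ultimately have "D = I" using si by (auto simp: simple_lie_def)
  then show ?thesis by (simp add: D_def)
qed

lemma orth_of_commute:
  assumes I: "lie_ideal_of br k I" and si: "simple_lie br I" and x: "x \<in> I"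
    and com: "\<And>b. b \<in> I \<Longrightarrow> br b y = 0"
  shows "B x y = 0"
proof -
  have "x \<in> span {br a b |a b. a \<in> I \<and> b \<in> I}" using simple_derived[OF I si] x by simp
  then show ?thesis
  proof (rule span_induct[where P="\<lambda>x. B x y = 0"])
    show "subspace {x. B x y = 0}" by (rule sub_ker[OF kill_lin_l])
    fix g assume "g \<in> {br a b |a b. a \<in> I \<and> b \<in> I}"
    then obtain a b where g: "g = br a b" "b \<in> I" by blast
    show "B g y = 0" using kill_inv2[of a b y] com[OF g(2)] g by (simp add: kill_simps)
  qed
qed

lemma ks_simple_set: "i < r \<Longrightarrow> lie_ideal_of br s (ks i) \<and> simple_lie br (ks i)"
  using kdec by (auto simp: k_decomp_def)

lemma ks_k_ideal: assumes i: "i < r" shows "lie_ideal_of br k (ks i)"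
proof -
  have I: "lie_ideal_of br s (ks i)" using ks_simple_set[OF i] by blast
  then have sub: "subspace (ks i)" and Is: "ks i \<subseteq> s" and Ibr: "\<And>a b. a \<in> s \<Longrightarrow> b \<in> ks i \<Longrightarrow> br a b \<in> ks i"
    by (auto simp: lie_ideal_of_def)
  have "br x y \<in> ks i" if x: "x \<in> k" and y: "y \<in> ks i" for x y
  proof -
    obtain t where t: "t \<in> s" "x - t \<in> z" using k_split[OF x] by blast
    have yk: "y \<in> k" using y Is s_k by auto
    have "br (x - t) y = 0" using t(2) yk by (auto simp: centre_def)
    then have "br x y = br t y" by (simp add: br_simps)
    then show ?thesis using Ibr[OF t(1) y] by simp
  qed
  then show ?thesis using sub Is s_k by (auto simp: lie_ideal_of_def)
qed

lemma z_ideal: "lie_ideal_of br k z"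
proof -
  have "br x y \<in> z" if "x \<in> k" "y \<in> z" for x y
  proof -
    have "br y x = 0" using that by (auto simp: centre_def)
    then have "br x y = 0" using anti[of x y] by simp
    then show ?thesis using subspace_0[OF sub_z] by simp
  qed
  then show ?thesis unfolding lie_ideal_of_def using sub_z z_k by blast
qed

lemma ks_ne: "i < r \<Longrightarrow> ks i \<noteq> {0}"
  using ks_simple_set by (force simp: simple_lie_def)

lemma ks_inter:
  assumes i: "i < r" and j: "j < r" and ij: "i \<noteq> j"
  shows "ks i \<inter> ks j = {0}"
proof -
  have inj: "ks i \<noteq> ks j" using kdec i j ij by (auto simp: k_decomp_def inj_on_def)
  have Ii: "lie_ideal_of br k (ks i)" and Ij: "lie_ideal_of br k (ks j)" using ks_k_ideal i j by auto
  have si: "simple_lie br (ks i)" and sj: "simple_lie br (ks j)" using ks_simple_set i j by auto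
  have "lie_ideal_of br (ks i) (ks i \<inter> ks j)"
    using Ii Ij unfolding lie_ideal_of_def by (auto intro: subspace_inter)
  then have "ks i \<inter> ks j = {0} \<or> ks i \<inter> ks j = ks i" using si by (auto simp: simple_lie_def)
  moreover have "ks i \<inter> ks j \<noteq> ks i"
  proof
    assume h: "ks i \<inter> ks j = ks i"
    have "lie_ideal_of br (ks j) (ks i)"
      using Ii Ij h unfolding lie_ideal_of_def by blast
    then have "ks i = {0} \<or> ks i = ks j" using sj by (auto simp: simple_lie_def)
    then show False using inj ks_ne[OF i] by blast
  qed
  ultimately show ?thesis by blast
qed

lemma ideals_commute:
  assumes "lie_ideal_of br k I" "lie_ideal_of br k J" "I \<inter> J = {0}" "x \<in> I" "y \<in> J"
  shows "br x y = 0"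
proof -
  have "br x y \<in> I"
    using assms(1,2,4,5) anti[of x y] unfolding lie_ideal_of_def
    by (metis subsetD subspace_neg)
  moreover have "br x y \<in> J" using assms(1,2,4,5) unfolding lie_ideal_of_def by blast
  ultimately show ?thesis using assms(3) by blast
qed

definition "W = span (\<Union>i<r. ks i)"

lemma W_s: "W \<subseteq> s"
  unfolding W_def using ks_simple_set sub_s by (intro span_minimal) (auto simp: lie_ideal_of_def)

lemma W_ideal: "lie_ideal_of br k W"
proof -
  have "br y w \<in> W" if y: "y \<in> k" and w: "w \<in> W" for y w
  proof -
    have "w \<in> span (\<Union>i<r. ks i)" using w by (simp add: W_def)
    then show ?thesis
    proof (rule span_induct[where P="\<lambda>w. br y w \<in> W"])
      show "subspace {w. br y w \<in> W}" by (rule sub_vimage[OF lin_r]) (simp add: W_def)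
      fix g assume "g \<in> (\<Union>i<r. ks i)"
      then obtain i where i: "i < r" "g \<in> ks i" by blast
      then have "br y g \<in> ks i" using ks_k_ideal[OF i(1)] y by (auto simp: lie_ideal_of_def)
      then show "br y g \<in> W" using i unfolding W_def by (auto intro: span_base)
    qed
  qed
  then show ?thesis using W_s s_k by (auto simp: lie_ideal_of_def W_def)
qed

lemma s_W: "s \<subseteq> W"
proof (rule ccontr)
  assume "\<not> s \<subseteq> W"
  then obtain x where x: "x \<in> s" "x \<notin> W" by blast
  have subW: "subspace W" by (simp add: W_def)
  define Wp where "Wp = {x\<in>s. \<forall>w\<in>W. B x w = 0}"
  have subWp: "subspace Wp"
    unfolding Wp_def subspace_def using sub_s by (auto simp: kill_simps subspace_def)
  have Wp_s: "Wp \<subseteq> s" by (auto simp: Wp_def)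
  have Wp_ideal: "lie_ideal_of br k Wp"
  proof -
    have "br y a \<in> Wp" if y: "y \<in> k" and a: "a \<in> Wp" for y a
    proof -
      have ak: "a \<in> k" using a Wp_s s_k by auto
      have "br y a \<in> s" using s_gen[OF y ak] .
      moreover have "B (br y a) w = 0" if w: "w \<in> W" for w
      proof -
        have "br y w \<in> W" using W_ideal y w by (auto simp: lie_ideal_of_def)
        then show ?thesis using kill_inv[of y a w] a by (auto simp: Wp_def)
      qed
      ultimately show ?thesis by (auto simp: Wp_def)
    qed
    then show ?thesis using subWp Wp_s s_k by (auto simp: lie_ideal_of_def)
  qed
  obtain u where u: "u \<in> W" "\<forall>w\<in>W. B (x - u) w = 0"
    using projU[OF subW] W_s s_k by blast
  have xu: "x - u \<in> Wp" using u x W_s sub_s by (auto simp: Wp_def subspace_diff)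
  have xu0: "x - u \<noteq> 0" using u x by auto
  define P where "P = (\<lambda>J. lie_ideal_of br k J \<and> J \<subseteq> Wp \<and> J \<noteq> {0})"
  have "P Wp" using Wp_ideal xu xu0 by (auto simp: P_def)
  then obtain J where J: "P J" and Jmin: "\<And>J'. P J' \<Longrightarrow> dim J \<le> dim J'"
    using ex_has_least_nat[of P Wp dim] by blast
  have Jid: "lie_ideal_of br k J" and JWp: "J \<subseteq> Wp" and Jne: "J \<noteq> {0}" using J by (auto simp: P_def)
  have subJ: "subspace J" and Jk: "J \<subseteq> k" using Jid by (auto simp: lie_ideal_of_def)
  have Js: "J \<subseteq> s" using JWp Wp_s by auto
  have nonab: "\<exists>a\<in>J. \<exists>b\<in>J. br a b \<noteq> 0"
  proof (rule ccontr)
    assume ab: "\<not> ?thesis"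
    have "a = 0" if a: "a \<in> J" for a
    proof -
      have "br a y = 0" if y: "y \<in> k" for y
      proof -
        obtain y1 where y1: "y1 \<in> J" "\<forall>x\<in>J. br x (y - y1) = 0" using ideal_compl[OF Jid y] by blast
        have "br a y = br a y1 + br a (y - y1)" by (simp add: br_simps)
        then show ?thesis using ab a y1 by auto
      qed
      then have "a \<in> z" using a Jk by (auto simp: centre_def)
      then show ?thesis using s_z_zero a Js by blast
    qed
    then show False using Jne subspace_0[OF subJ] by blast
  qed
  have ideals: "J' = {0} \<or> J' = J" if J': "lie_ideal_of br J J'" for J'
  proof -
    have subJ': "subspace J'" and J'J: "J' \<subseteq> J" and J'br: "\<And>a b. a \<in> J \<Longrightarrow> b \<in> J' \<Longrightarrow> br a b \<in> J'"
      using J' by (auto simp: lie_ideal_of_def)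
    have "br y x \<in> J'" if y: "y \<in> k" and x: "x \<in> J'" for y x
    proof -
      obtain y1 where y1: "y1 \<in> J" "\<forall>x\<in>J. br x (y - y1) = 0" using ideal_compl[OF Jid y] by blast
      have "br x (y - y1) = 0" using y1 x J'J by auto
      then have "br x y = br x y1" by (simp add: br_simps)
      then have "br y x = br y1 x" using anti[of x y] anti[of x y1] by simp
      then show ?thesis using J'br[OF y1(1) x] by simp
    qed
    then have "lie_ideal_of br k J'" using subJ' J'J Jk by (auto simp: lie_ideal_of_def)
    moreover have "J' \<noteq> {0} \<Longrightarrow> J' = J"
    proof -
      assume "J' \<noteq> {0}"
      then have "P J'" using \<open>lie_ideal_of br k J'\<close> J'J JWp by (auto simp: P_def)
      then have "dim J \<le> dim J'" by (rule Jmin)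
      then show "J' = J" using subspace_dim_equal[OF subJ' subJ J'J] by simp
    qed
    ultimately show ?thesis by blast
  qed
  have "simple_lie br J" using nonab ideals by (auto simp: simple_lie_def)
  moreover have "lie_ideal_of br s J" using subJ Js Jid s_k by (auto simp: lie_ideal_of_def)
  ultimately have "J \<in> ks ` {..<r}" using kdec by (auto simp: k_decomp_def)
  then have JW: "J \<subseteq> W" unfolding W_def by (auto intro: span_base)
  have "a = 0" if a: "a \<in> J" for a
  proof -
    have "B a a = 0" using a JW JWp by (auto simp: Wp_def)
    then show ?thesis using negdef a Jk by blast
  qed
  then show False using Jne subspace_0[OF subJ] by blast
qed

lemma r_le_m: "r \<le> m" using kdec by (auto simp: k_decomp_def split: if_splits)

lemma k_span: "k \<subseteq> span (\<Union>i<m. ks i)"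
proof
  fix x assume x: "x \<in> k"
  obtain t where t: "t \<in> s" "x - t \<in> z" using k_split[OF x] by blast
  have "t \<in> span (\<Union>i<r. ks i)" using s_W t W_def by auto
  moreover have "span (\<Union>i<r. ks i) \<subseteq> span (\<Union>i<m. ks i)" using r_le_m by (intro span_mono UN_mono) auto
  ultimately have t': "t \<in> span (\<Union>i<m. ks i)" by blast
  have "x - t \<in> span (\<Union>i<m. ks i)"
  proof (cases "z = {0}")
    case True then show ?thesis using t by (simp add: span_0)
  next
    case False
    then have "m = Suc r" "ks r = z" using kdec by (auto simp: k_decomp_def)
    then show ?thesis using t by (auto intro: span_base)
  qed
  then have "t + (x - t) \<in> span (\<Union>i<m. ks i)" using t' by (rule span_add[rotated])
  then show "x \<in> span (\<Union>i<m. ks i)" by simp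
qed

lemma ks_cases: assumes "i < m" shows "i < r \<or> (i = r \<and> ks i = z \<and> z \<noteq> {0})"
proof (cases "z = {0}")
  case True
  then have "m = r" using kdec by (simp add: k_decomp_def)
  then show ?thesis using assms by simp
next
  case False
  then have "m = Suc r" "ks r = z" using kdec by (auto simp: k_decomp_def)
  then show ?thesis using assms False by (auto simp: less_Suc_eq)
qed

lemma ks_ideal: "i < m \<Longrightarrow> lie_ideal_of br k (ks i)"
  using ks_cases ks_k_ideal z_ideal by metis

lemma ks_nonzero: "i < m \<Longrightarrow> ks i \<noteq> {0}"
  using ks_cases ks_ne by metis

lemma ks_sub: "i < m \<Longrightarrow> subspace (ks i)" and ks_k: "i < m \<Longrightarrow> ks i \<subseteq> k"
  using ks_ideal by (auto simp: lie_ideal_of_def)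

lemma ks_disj:
  assumes i: "i < m" and j: "j < m" and ij: "i \<noteq> j" and x: "x \<in> ks i" and y: "y \<in> ks j"
  shows "br x y = 0 \<and> B x y = 0"
proof -
  have xk: "x \<in> k" and yk: "y \<in> k" using ks_k i j x y by auto
  consider "i < r" "j < r" | "i < r" "j = r" "ks j = z" | "i = r" "ks i = z" "j < r"
    using ks_cases[OF i] ks_cases[OF j] ij by auto
  then show ?thesis
  proof cases
    case 1
    have br0: "br a b = 0" if "a \<in> ks i" "b \<in> ks j" for a b
      using ideals_commute[OF ks_k_ideal[OF 1(1)] ks_k_ideal[OF 1(2)] ks_inter[OF 1 ij] that] .
    then have "B x y = 0"
      using orth_of_commute[OF ks_k_ideal[OF 1(1)] conjunct2[OF ks_simple_set[OF 1(1)]] x] y by blast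
    then show ?thesis using br0 x y by blast
  next
    case 2
    have br0: "br a y = 0" if "a \<in> k" for a
      using y 2 that anti[of a y] by (auto simp: centre_def)
    have "B x y = 0"
      using orth_of_commute[OF ks_k_ideal[OF 2(1)] conjunct2[OF ks_simple_set[OF 2(1)]] x] br0 ks_k[OF i] by blast
    then show ?thesis using br0 xk by blast
  next
    case 3
    have br0: "br x a = 0" if "a \<in> k" for a
      using x 3 that by (auto simp: centre_def)
    have br0': "br a x = 0" if "a \<in> k" for a using br0[OF that] anti[of a x] by simp
    have "B y x = 0"
      using orth_of_commute[OF ks_k_ideal[OF 3(3)] conjunct2[OF ks_simple_set[OF 3(3)]] y] br0' ks_k[OF j] by blast
    then show ?thesis using br0 yk kill_sym by metis
  qed
qed

end


lemma sub_fix: "linear f \<Longrightarrow> subspace {x. f x = x}"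
  by (auto simp: subspace_def linear_add linear_scale linear_0)

context cs begin

definition "cmp j = (if j < m then ks j else p)"
definition "blk j = (SOME S. onb Q (cmp j) S \<and> card S = dim (cmp j))"
definition "EE = (\<Union>j\<le>m. blk j)"
definition "pr j x = (\<Sum>a\<in>blk j. Q x a *\<^sub>R a)"

lemma comp_sub: "j \<le> m \<Longrightarrow> subspace (cmp j)"
  using ks_sub sub_p by (auto simp: cmp_def)

lemma blk_onb: assumes "j \<le> m" shows "onb Q (cmp j) (blk j)" "card (blk j) = dim (cmp j)"
proof -
  have "\<exists>S. onb Q (cmp j) S \<and> card S = dim (cmp j)"
    by (rule gram_schmidt[OF Q_bil comp_sub[OF assms]]) (auto simp: Q_sym Q_pos)
  then have "onb Q (cmp j) (blk j) \<and> card (blk j) = dim (cmp j)"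
    unfolding blk_def by (rule someI_ex)
  then show "onb Q (cmp j) (blk j)" "card (blk j) = dim (cmp j)" by auto
qed

lemma blk_fin: "j \<le> m \<Longrightarrow> finite (blk j)" using blk_onb(1)[of j] unfolding onb_def by blast
lemma blk_comp: "j \<le> m \<Longrightarrow> a \<in> blk j \<Longrightarrow> a \<in> cmp j" using blk_onb(1)[of j] unfolding onb_def by blast
lemma blk_Q: "j \<le> m \<Longrightarrow> a \<in> blk j \<Longrightarrow> b \<in> blk j \<Longrightarrow> Q a b = (if a = b then 1 else 0)"
  using blk_onb(1)[of j] unfolding onb_def by blast
lemma blk_rep: "j \<le> m \<Longrightarrow> x \<in> cmp j \<Longrightarrow> pr j x = x"
  using blk_onb(1)[of j] unfolding pr_def onb_def by metis

lemma comp_k: "j < m \<Longrightarrow> cmp j = ks j" by (simp add: cmp_def)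
lemma comp_m: "cmp m = p" by (simp add: cmp_def)

lemma comp_orth:
  assumes i: "i \<le> m" and j: "j \<le> m" and ij: "i \<noteq> j" and x: "x \<in> cmp i" and y: "y \<in> cmp j"
  shows "Q x y = 0"
proof (cases "i < m")
  case True
  then have xk: "x \<in> ks i" "x \<in> k" using x ks_k by (auto simp: cmp_def)
  show ?thesis
  proof (cases "j < m")
    case True
    then have "y \<in> ks j" using y by (simp add: cmp_def)
    then show ?thesis using ks_disj[OF \<open>i < m\<close> True ij xk(1)] Q_k[OF xk(2)] by simp
  next
    case False
    then have "y \<in> p" using y by (simp add: cmp_def)
    then show ?thesis using Q_kp[OF xk(2)] by simp
  qed
next
  case False
  then have "i = m" using i by simp
  then have xp: "x \<in> p" using x by (simp add: cmp_def)
  have "j < m" using j ij \<open>i = m\<close> by simp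
  then have "y \<in> k" using y ks_k by (auto simp: cmp_def)
  then show ?thesis using Q_kp[OF _ xp] Q_sym by metis
qed

lemma blk_disj: assumes "i \<le> m" "j \<le> m" "i \<noteq> j" shows "blk i \<inter> blk j = {}"
proof (rule ccontr)
  assume "blk i \<inter> blk j \<noteq> {}"
  then obtain a where a: "a \<in> blk i" "a \<in> blk j" by blast
  have "Q a a = 1" using blk_Q[OF assms(1) a(1) a(1)] by simp
  moreover have "Q a a = 0" using comp_orth[OF assms blk_comp[OF assms(1) a(1)] blk_comp[OF assms(2) a(2)]] .
  ultimately show False by simp
qed

lemma pr_lin: "linear (pr j)"
  unfolding pr_def
  by (rule linearI) (simp_all add: Q_simps scaleR_add_left sum.distrib scaleR_sum_right)

lemma pr_other: assumes "i \<le> m" "j \<le> m" "i \<noteq> j" "x \<in> cmp i" shows "pr j x = 0"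
  unfolding pr_def
proof (rule sum.neutral, rule ballI)
  fix a assume "a \<in> blk j"
  then have "Q x a = 0" using comp_orth[OF assms(1,2,3,4) blk_comp[OF assms(2)]] by blast
  then show "Q x a *\<^sub>R a = 0" by simp
qed

lemma sum_pr_comp: assumes "i \<le> m" "x \<in> cmp i" shows "(\<Sum>j\<le>m. pr j x) = x"
proof -
  have "(\<Sum>j\<le>m. pr j x) = (\<Sum>j\<le>m. if j = i then x else 0)"
    using assms pr_other blk_rep by (intro sum.cong) auto
  then show ?thesis using assms by simp
qed

lemma sum_pr: "(\<Sum>j\<le>m. pr j x) = x"
proof -
  have lin: "linear (\<lambda>x. \<Sum>j\<le>m. pr j x)"
    by (rule linearI) (simp_all add: linear_add[OF pr_lin] linear_scale[OF pr_lin] sum.distrib scaleR_sum_right)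
  have "K x \<in> span (\<Union>i<m. ks i)" using k_span K_in by blast
  then have kx: "(\<Sum>j\<le>m. pr j (K x)) = K x"
  proof (rule span_induct[where P="\<lambda>y. (\<Sum>j\<le>m. pr j y) = y"])
    show "subspace {y. (\<Sum>j\<le>m. pr j y) = y}" by (rule sub_fix[OF lin])
    fix y assume "y \<in> (\<Union>i<m. ks i)"
    then obtain i where "i < m" "y \<in> ks i" by blast
    then show "(\<Sum>j\<le>m. pr j y) = y" using sum_pr_comp[of i y] by (simp add: cmp_def)
  qed
  have px: "(\<Sum>j\<le>m. pr j (x - K x)) = x - K x" using sum_pr_comp[of m "x - K x"] P_in by (simp add: cmp_def)
  have "(\<Sum>j\<le>m. pr j x) = (\<Sum>j\<le>m. pr j (K x)) + (\<Sum>j\<le>m. pr j (x - K x))"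
    using linear_add[OF lin, of "K x" "x - K x"] by simp
  then show ?thesis using kx px by simp
qed

lemma finEE: "finite EE" unfolding EE_def using blk_fin by auto

lemma sum_EE: "(\<Sum>a\<in>EE. f a) = (\<Sum>j\<le>m. \<Sum>a\<in>blk j. f a)"
  unfolding EE_def by (rule sum.UNION_disjoint) (auto simp: blk_fin dest: blk_disj)

lemma EE_blk: "a \<in> EE \<Longrightarrow> \<exists>j\<le>m. a \<in> blk j" by (auto simp: EE_def)

lemma EE_Q: assumes "a \<in> EE" "b \<in> EE" shows "Q a b = (if a = b then 1 else 0)"
proof -
  obtain i j where ij: "i \<le> m" "a \<in> blk i" "j \<le> m" "b \<in> blk j" using assms EE_blk by blast
  show ?thesis
  proof (cases "i = j")
    case True then show ?thesis using ij blk_Q by auto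
  next
    case False
    then have "a \<noteq> b" using blk_disj ij by blast
    then show ?thesis using comp_orth[OF ij(1,3) False] blk_comp ij by auto
  qed
qed

lemma EE_onb: "onb Q UNIV EE"
  unfolding onb_def
proof (intro conjI ballI)
  show "finite EE" by (rule finEE)
  show "EE \<subseteq> UNIV" by simp
  fix a b assume "a \<in> EE" "b \<in> EE" then show "Q a b = (if a = b then 1 else 0)" by (rule EE_Q)
next
  fix x :: 'g
  show "x = (\<Sum>a\<in>EE. Q x a *\<^sub>R a)" using sum_pr[of x] by (simp add: sum_EE pr_def)
qed

lemma qproj_pr: assumes j: "j \<le> m" shows "qproj br k (cmp j) x = pr j x"
proof -
  have sym: "\<forall>x\<in>cmp j. \<forall>y\<in>cmp j. Q x y = Q y x" using Q_sym by blast
  have a: "pr j x \<in> cmp j" "\<forall>w\<in>cmp j. Q (x - pr j x) w = 0"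
    using onb_proj[OF blk_onb(1)[OF j] Q_bil sym comp_sub[OF j]] by (auto simp: pr_def)
  show ?thesis unfolding qproj_def
  proof (rule the_equality)
    show "pr j x \<in> cmp j \<and> (\<forall>w\<in>cmp j. Q (x - pr j x) w = 0)" using a by blast
    fix u assume u: "u \<in> cmp j \<and> (\<forall>w\<in>cmp j. Q (x - u) w = 0)"
    show "u = pr j x"
      by (rule proj_unique[OF comp_sub[OF j] Q_bil _ _ _ a]) (use u Q_pos in force)+
  qed
qed

lemma Q_pr: assumes j: "j \<le> m" shows "Q (pr j x) (pr j y) = (\<Sum>a\<in>blk j. Q x a * Q y a)"
proof -
  have "Q (pr j x) (pr j y) = (\<Sum>a\<in>blk j. Q (pr j x) (Q y a *\<^sub>R a))"
    unfolding pr_def[of j y] by (rule linear_sum[OF linear_compose[OF _ _], simplified o_def, of "\<lambda>x. x"])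
      (simp_all add: linear_iff Q_simps)
  also have "\<dots> = (\<Sum>a\<in>blk j. Q x a * Q y a)"
    using onb_coeff[OF blk_onb(1)[OF j] Q_bil] by (intro sum.cong) (auto simp: Q_simps pr_def)
  finally show ?thesis .
qed

lemma Qres_comp: "j \<le> m \<Longrightarrow> Qres br k (cmp j) x y = (\<Sum>a\<in>blk j. Q x a * Q y a)"
  by (simp add: Qres_def qproj_pr Q_pr)

definition "wt c0 c j = (if j < m then c j else c0)"

lemma kform_EE: "kform br k ks m c0 c x y = (\<Sum>j\<le>m. wt c0 c j * (\<Sum>a\<in>blk j. Q x a * Q y a))"
proof -
  have "kform br k ks m c0 c x y = c0 * Qres br k (cmp m) x y + (\<Sum>i<m. c i * Qres br k (cmp i) x y)"
    by (simp add: kform_def cmp_def)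
  also have "\<dots> = (\<Sum>j\<le>m. wt c0 c j * (\<Sum>a\<in>blk j. Q x a * Q y a))"
    by (simp add: Qres_comp lessThan_Suc_atMost[symmetric] wt_def)
  finally show ?thesis .
qed

definition "bix a = (THE j. j \<le> m \<and> a \<in> blk j)"

lemma bix: "j \<le> m \<Longrightarrow> a \<in> blk j \<Longrightarrow> bix a = j"
  unfolding bix_def using blk_disj by (intro the_equality) auto

definition "lamw c0 c a = wt c0 c (bix a)"

lemma kform_lam: "kform br k ks m c0 c x y = (\<Sum>a\<in>EE. lamw c0 c a * Q x a * Q y a)"
  unfolding kform_EE sum_EE lamw_def
  by (intro sum.cong refl) (auto simp: bix sum_distrib_left mult.assoc)

end


definition "pat (m::nat) i j l \<longleftrightarrow> (i < m \<and> j = i \<and> l = i) \<or> (i < m \<and> j = m \<and> l = m)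
   \<or> (i = m \<and> j < m \<and> l = m) \<or> (i = m \<and> j = m \<and> l < m)"

lemma collapse:
  fixes G :: "nat \<Rightarrow> nat \<Rightarrow> nat \<Rightarrow> real"
  assumes van: "\<And>i j l. i \<le> m \<Longrightarrow> j \<le> m \<Longrightarrow> l \<le> m \<Longrightarrow> \<not> pat m i j l \<Longrightarrow> G i j l = 0"
  shows "(\<Sum>j\<le>m. \<Sum>i\<le>m. \<Sum>l\<le>m. G i j l) = (\<Sum>i<m. G i i i + G i m m + G m i m + G m m i)"
proof -
  have am: "{..m} = insert m {..<m}" by auto
  have h1: "(\<Sum>i<m. \<Sum>l<m. G i j l) = G j j j" if j: "j < m" for j
  proof -
    have "(\<Sum>l<m. G i j l) = (if i = j then G j j j else 0)" if i: "i < m" for i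
    proof -
      have "(\<Sum>l<m. G i j l) = (\<Sum>l<m. if l = i \<and> i = j then G j j j else 0)"
        using i j van by (intro sum.cong) (auto simp: pat_def)
      then show ?thesis using i by (simp add: sum.delta' split: if_splits)
    qed
    then have "(\<Sum>i<m. \<Sum>l<m. G i j l) = (\<Sum>i<m. if i = j then G j j j else 0)" by simp
    then show ?thesis using j by (simp add: sum.delta')
  qed
  have z1: "(\<Sum>i<m. G i j m) = 0" if "j < m" for j using that van by (intro sum.neutral) (auto simp: pat_def)
  have z2: "(\<Sum>l<m. G m j l) = 0" if "j < m" for j using that van by (intro sum.neutral) (auto simp: pat_def)
  have z3: "(\<Sum>i<m. \<Sum>l<m. G i m l) = 0" using van by (intro sum.neutral ballI) (auto simp: pat_def)
  have z4: "G m m m = 0" using van by (simp add: pat_def)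
  have "(\<Sum>j\<le>m. \<Sum>i\<le>m. \<Sum>l\<le>m. G i j l)
      = (\<Sum>j\<le>m. (\<Sum>i<m. \<Sum>l<m. G i j l) + (\<Sum>i<m. G i j m) + ((\<Sum>l<m. G m j l) + G m j m))"
    unfolding am by (simp add: sum.distrib)
  also have "\<dots> = (\<Sum>j<m. G j j j + G m j m) + ((\<Sum>i<m. G i m m) + (\<Sum>l<m. G m m l))"
    unfolding am using h1 z1 z2 z3 z4 by (simp add: sum.distrib)
  also have "\<dots> = (\<Sum>i<m. G i i i + G i m m + G m i m + G m m i)"
    by (simp add: sum.distrib)
  finally show ?thesis .
qed

context cs begin

definition "epsb j = (if j < m then -1 else (1::real))"
definition "epsv a = epsb (bix a)"
definition "CQ a b d = Q (br a b) d"
definition "SB i j l = (\<Sum>a\<in>blk i. \<Sum>b\<in>blk j. \<Sum>d\<in>blk l. (CQ a b d)\<^sup>2)"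

lemma cmp_k: "i < m \<Longrightarrow> x \<in> cmp i \<Longrightarrow> x \<in> k" using ks_k by (auto simp: cmp_def)
lemma cmp_p: "x \<in> cmp m \<Longrightarrow> x \<in> p" by (simp add: cmp_def)

lemma vanish_cmp:
  assumes i: "i \<le> m" and j: "j \<le> m" and l: "l \<le> m" and np: "\<not> pat m i j l"
    and x: "x \<in> cmp i" and y: "y \<in> cmp j" and w: "w \<in> cmp l"
  shows "Q (br x y) w = 0"
proof (cases "i < m")
  case im: True
  show ?thesis
  proof (cases "j < m")
    case jm: True
    show ?thesis
    proof (cases "i = j")
      case False
      have "br x y = 0" using ks_disj[OF im jm False] x y im jm by (simp add: cmp_def)
      then show ?thesis by (simp add: Q_simps)
    next
      case True
      have "y \<in> ks i" using y True jm by (simp add: cmp_def)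
      then have xy: "br x y \<in> ks i" using ks_ideal[OF im] cmp_k[OF im x] by (auto simp: lie_ideal_of_def)
      have li: "l \<noteq> i" using np True im by (auto simp: pat_def)
      show ?thesis
      proof (cases "l < m")
        case True
        then show ?thesis using comp_orth[OF i l li[symmetric], of "br x y" w] xy w im by (simp add: cmp_def)
      next
        case False
        then have "w \<in> p" using w l by (simp add: cmp_def)
        then show ?thesis using Q_kp xy ks_k[OF im] by blast
      qed
    qed
  next
    case False
    then have jm: "j = m" using j by simp
    have xy: "br x y \<in> p" using kp_br[OF cmp_k[OF im x]] y jm by (simp add: cmp_def)
    have "l < m" using np im jm l by (auto simp: pat_def)
    then have "w \<in> k" using cmp_k w by blast
    then show ?thesis using Q_kp xy Q_sym by metis
  qed
next
  case False
  then have im: "i = m" using i by simp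
  have xp: "x \<in> p" using x im by (simp add: cmp_def)
  show ?thesis
  proof (cases "j < m")
    case True
    have xy: "br x y \<in> p" using pk_br[OF cmp_k[OF True y] xp] .
    have "l < m" using np im True l by (auto simp: pat_def)
    then have "w \<in> k" using cmp_k w by blast
    then show ?thesis using Q_kp xy Q_sym by metis
  next
    case False
    then have "j = m" using j by simp
    then have xy: "br x y \<in> k" using p_br xp y by (simp add: cmp_def)
    have "l = m" using np im \<open>j = m\<close> l by (auto simp: pat_def)
    then have "w \<in> p" using w by (simp add: cmp_def)
    then show ?thesis using Q_kp xy by blast
  qed
qed

lemma EE_cmp: "a \<in> EE \<Longrightarrow> bix a \<le> m \<and> a \<in> blk (bix a) \<and> a \<in> cmp (bix a)"
  using EE_blk bix blk_comp by metis

lemma vanish_EE: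
  assumes "a \<in> EE" "b \<in> EE" "d \<in> EE" "\<not> pat m (bix a) (bix b) (bix d)"
  shows "CQ a b d = 0"
  unfolding CQ_def using vanish_cmp assms EE_cmp by blast

lemma R2_EE:
  assumes a: "a \<in> EE" and b: "b \<in> EE" and d: "d \<in> EE"
  shows "CQ a b d = - (epsv b * epsv d) * CQ a d b"
proof (cases "bix a < m")
  case True
  have ak: "a \<in> k" using cmp_k[OF True] EE_cmp[OF a] by blast
  have sk: "CQ a b d = - CQ a d b" unfolding CQ_def using skew_k[OF ak, of b d] Q_sym by metis
  show ?thesis
  proof (cases "(bix b < m) = (bix d < m)")
    case True
    then have "epsv b * epsv d = 1" by (auto simp: epsv_def epsb_def)
    then show ?thesis using sk by simp
  next
    case False
    then have "\<not> pat m (bix a) (bix b) (bix d)" "\<not> pat m (bix a) (bix d) (bix b)"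
      using \<open>bix a < m\<close> by (auto simp: pat_def)
    then show ?thesis using vanish_EE a b d by simp
  qed
next
  case False
  then have am: "bix a = m" using EE_cmp[OF a] by simp
  have ap: "a \<in> p" using cmp_p EE_cmp[OF a] am by metis
  have sy: "CQ a b d = CQ a d b" unfolding CQ_def using sym_p[OF ap, of b d] Q_sym by metis
  show ?thesis
  proof (cases "(bix b < m) = (bix d < m)")
    case False
    then have "epsv b * epsv d = -1" by (auto simp: epsv_def epsb_def)
    then show ?thesis using sy by simp
  next
    case True
    then have "\<not> pat m (bix a) (bix b) (bix d)" "\<not> pat m (bix a) (bix d) (bix b)"
      using am by (auto simp: pat_def)
    then show ?thesis using vanish_EE a b d by simp
  qed
qed

lemma SB_van: assumes "i \<le> m" "j \<le> m" "l \<le> m" "\<not> pat m i j l" shows "SB i j l = 0"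
  unfolding SB_def CQ_def
proof (intro sum.neutral ballI)
  fix a b d assume "a \<in> blk i" "b \<in> blk j" "d \<in> blk l"
  then have "Q (br a b) d = 0"
    using vanish_cmp[OF assms blk_comp[OF assms(1)] blk_comp[OF assms(2)] blk_comp[OF assms(3)]] by blast
  then show "(Q (br a b) d)\<^sup>2 = 0" by simp
qed

definition "Wb c0 c i j l =
   (- (1 + (wt c0 c j / wt c0 c l) * (epsb j * epsb l) - (wt c0 c i / wt c0 c l) * (epsb i * epsb l))
    * (epsb i * epsb l + wt c0 c l / wt c0 c i - (wt c0 c j / wt c0 c i) * (epsb j * epsb l)) / 4
    - (- (epsb i * epsb l) - (wt c0 c j / wt c0 c i) * (epsb j * epsb l) + wt c0 c l / wt c0 c i) / 2)
   / wt c0 c j"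

lemma scal_SB:
  assumes c0: "c0 > 0" and c: "\<forall>i<m. c i > 0"
  shows "scal (kform br k ks m c0 c) br = (\<Sum>i<m. Wb c0 c i i i * SB i i i + Wb c0 c i m m * SB i m m
            + Wb c0 c m i m * SB m i m + Wb c0 c m m i * SB m m i)"
proof -
  have lp: "lamw c0 c a > 0" if "a \<in> EE" for a
    using EE_cmp[OF that] c0 c by (auto simp: lamw_def wt_def)
  interpret dg: diag br Q EE "lamw c0 c"
    by unfold_locales (auto simp: Q_bil Q_sym EE_onb lp)
  have gm: "kform br k ks m c0 c = dg.gm"
    by (intro ext) (simp add: kform_lam dg.gm_def)
  have R2: "dg.CC a b d = - (epsv b * epsv d) * dg.CC a d b" if "a \<in> EE" "b \<in> EE" "d \<in> EE" for a b d
    using R2_EE[OF that] by (simp add: CQ_def dg.CC_def)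
  have "scal (kform br k ks m c0 c) br = (\<Sum>b\<in>EE. \<Sum>a\<in>EE. \<Sum>d\<in>EE.
     (dg.CC a b d)\<^sup>2 * ((- dg.ff1 epsv a b d * dg.ff2 epsv a b d / 4 - dg.ff3 epsv a b d / 2) / lamw c0 c b))"
    unfolding gm by (rule dg.scal_W[OF R2])
  also have "\<dots> = (\<Sum>j\<le>m. \<Sum>b\<in>blk j. \<Sum>i\<le>m. \<Sum>a\<in>blk i. \<Sum>l\<le>m. \<Sum>d\<in>blk l. Wb c0 c i j l * (CQ a b d)\<^sup>2)"
    unfolding sum_EE
    by (intro sum.cong refl)
      (simp add: bix epsv_def lamw_def Wb_def dg.ff1_def dg.ff2_def dg.ff3_def dg.CC_def CQ_def mult.commute)
  also have "\<dots> = (\<Sum>j\<le>m. \<Sum>i\<le>m. \<Sum>l\<le>m. Wb c0 c i j l * SB i j l)"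
  proof (intro sum.cong refl)
    fix j
    have "(\<Sum>b\<in>blk j. \<Sum>i\<le>m. \<Sum>a\<in>blk i. \<Sum>l\<le>m. \<Sum>d\<in>blk l. Wb c0 c i j l * (CQ a b d)\<^sup>2)
        = (\<Sum>i\<le>m. \<Sum>b\<in>blk j. \<Sum>a\<in>blk i. \<Sum>l\<le>m. \<Sum>d\<in>blk l. Wb c0 c i j l * (CQ a b d)\<^sup>2)"
      by (rule sum.swap)
    also have "\<dots> = (\<Sum>i\<le>m. \<Sum>l\<le>m. Wb c0 c i j l * SB i j l)"
    proof (intro sum.cong refl)
      fix i
      have "(\<Sum>b\<in>blk j. \<Sum>a\<in>blk i. \<Sum>l\<le>m. \<Sum>d\<in>blk l. Wb c0 c i j l * (CQ a b d)\<^sup>2)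
          = (\<Sum>a\<in>blk i. \<Sum>b\<in>blk j. \<Sum>l\<le>m. \<Sum>d\<in>blk l. Wb c0 c i j l * (CQ a b d)\<^sup>2)"
        by (rule sum.swap)
      also have "\<dots> = (\<Sum>a\<in>blk i. \<Sum>l\<le>m. \<Sum>b\<in>blk j. \<Sum>d\<in>blk l. Wb c0 c i j l * (CQ a b d)\<^sup>2)"
        by (intro sum.cong refl) (rule sum.swap)
      also have "\<dots> = (\<Sum>l\<le>m. \<Sum>a\<in>blk i. \<Sum>b\<in>blk j. \<Sum>d\<in>blk l. Wb c0 c i j l * (CQ a b d)\<^sup>2)"
        by (rule sum.swap)
      also have "\<dots> = (\<Sum>l\<le>m. Wb c0 c i j l * SB i j l)"
        by (simp add: SB_def sum_distrib_left)
      finally show "(\<Sum>b\<in>blk j. \<Sum>a\<in>blk i. \<Sum>l\<le>m. \<Sum>d\<in>blk l. Wb c0 c i j l * (CQ a b d)\<^sup>2)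
          = (\<Sum>l\<le>m. Wb c0 c i j l * SB i j l)" .
    qed
    finally show "(\<Sum>b\<in>blk j. \<Sum>i\<le>m. \<Sum>a\<in>blk i. \<Sum>l\<le>m. \<Sum>d\<in>blk l. Wb c0 c i j l * (CQ a b d)\<^sup>2)
        = (\<Sum>i\<le>m. \<Sum>l\<le>m. Wb c0 c i j l * SB i j l)" .
  qed
  also have "\<dots> = (\<Sum>i<m. Wb c0 c i i i * SB i i i + Wb c0 c i m m * SB i m m
            + Wb c0 c m i m * SB m i m + Wb c0 c m m i * SB m m i)"
    by (rule collapse) (simp add: SB_van)
  finally show ?thesis .
qed

end


context cs begin

lemma QQ_expand: "Q u u = (\<Sum>d\<in>EE. (Q u d)\<^sup>2)"
proof -
  have "Q u u = Q u (\<Sum>d\<in>EE. Q u d *\<^sub>R d)" using EE_onb by (simp add: onb_def)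
  also have "\<dots> = (\<Sum>d\<in>EE. Q u (Q u d *\<^sub>R d))"
    by (rule linear_sum) (simp add: linear_iff Q_simps)
  finally show ?thesis by (simp add: Q_simps power2_eq_square)
qed

lemma kill_EE: "B x y = (\<Sum>c\<in>EE. Q (br x (br y c)) c)"
  unfolding killing_def
  by (rule trace_onb[OF EE_onb lin_ad2]) (simp add: linear_iff Q_simps)

lemma sum_EE2: "(\<Sum>c\<in>EE. \<Sum>d\<in>EE. f c d) = (\<Sum>j\<le>m. \<Sum>l\<le>m. \<Sum>c\<in>blk j. \<Sum>d\<in>blk l. f c d)"
proof -
  have "(\<Sum>c\<in>EE. \<Sum>d\<in>EE. f c d) = (\<Sum>j\<le>m. \<Sum>c\<in>blk j. \<Sum>l\<le>m. \<Sum>d\<in>blk l. f c d)"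
    by (simp add: sum_EE)
  also have "\<dots> = (\<Sum>j\<le>m. \<Sum>l\<le>m. \<Sum>c\<in>blk j. \<Sum>d\<in>blk l. f c d)"
    by (intro sum.cong refl) (rule sum.swap)
  finally show ?thesis .
qed

lemma p_row: assumes e: "e \<in> blk m" shows "(\<Sum>c\<in>EE. \<Sum>d\<in>EE. (CQ e c d)\<^sup>2) = 1"
proof -
  have ep: "e \<in> p" using blk_comp[OF _ e] by (simp add: cmp_def)
  have "1 = Q e e" using blk_Q[OF _ e e] by simp
  also have "\<dots> = B e e" by (rule Q_p[OF ep])
  also have "\<dots> = (\<Sum>c\<in>EE. Q (br e c) (br e c))"
    unfolding kill_EE by (intro sum.cong refl) (simp add: sym_p[OF ep] Q_sym)
  also have "\<dots> = (\<Sum>c\<in>EE. \<Sum>d\<in>EE. (CQ e c d)\<^sup>2)"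
    by (simp add: QQ_expand CQ_def)
  finally show ?thesis by simp
qed

lemma k_row: assumes i: "i < m" and a: "a \<in> blk i" shows "(\<Sum>c\<in>EE. \<Sum>d\<in>EE. (CQ a c d)\<^sup>2) = 1"
proof -
  have ak: "a \<in> k" using blk_comp[OF _ a] i cmp_k by simp
  have "1 = Q a a" using blk_Q[OF _ a a] i by simp
  also have "\<dots> = - B a a" by (rule Q_k[OF ak])
  also have "\<dots> = (\<Sum>c\<in>EE. Q (br a c) (br a c))"
    unfolding kill_EE by (simp add: skew_k[OF ak] Q_sym sum_negf[symmetric])
  also have "\<dots> = (\<Sum>c\<in>EE. \<Sum>d\<in>EE. (CQ a c d)\<^sup>2)"
    by (simp add: QQ_expand CQ_def)
  finally show ?thesis by simp
qed

lemma k_row_split: assumes i: "i < m" and a: "a \<in> blk i"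
  shows "(\<Sum>c\<in>EE. \<Sum>d\<in>EE. (CQ a c d)\<^sup>2)
       = (\<Sum>c\<in>blk i. \<Sum>d\<in>blk i. (CQ a c d)\<^sup>2) + (\<Sum>c\<in>blk m. \<Sum>d\<in>blk m. (CQ a c d)\<^sup>2)"
proof -
  define G where "G j l = (\<Sum>c\<in>blk j. \<Sum>d\<in>blk l. (CQ a c d)\<^sup>2)" for j l
  have van: "G j l = 0" if "j \<le> m" "l \<le> m" "\<not> pat m i j l" for j l
    unfolding G_def CQ_def
  proof (intro sum.neutral ballI)
    fix c d assume "c \<in> blk j" "d \<in> blk l"
    then show "(Q (br a c) d)\<^sup>2 = 0"
      using vanish_cmp[OF _ that(1,2,3) blk_comp[OF _ a] blk_comp[OF that(1)] blk_comp[OF that(2)]] i by simp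
  qed
  have am: "{..m} = insert m {..<m}" by auto
  have "(\<Sum>j\<le>m. \<Sum>l\<le>m. G j l) = G i i + G m m"
  proof -
    have r1: "(\<Sum>l<m. G j l) = (if j = i then G i i else 0)" if "j < m" for j
    proof -
      have "(\<Sum>l<m. G j l) = (\<Sum>l<m. if l = i \<and> j = i then G i i else 0)"
        using that van i by (intro sum.cong) (auto simp: pat_def)
      then show ?thesis using i by (simp add: sum.delta' split: if_splits)
    qed
    have r2: "G j m = 0" if "j < m" for j using van that i by (simp add: pat_def)
    have r3: "G m l = 0" if "l < m" for l using van that i by (simp add: pat_def)
    have "(\<Sum>j\<le>m. \<Sum>l\<le>m. G j l) = (\<Sum>j<m. (\<Sum>l<m. G j l) + G j m) + ((\<Sum>l<m. G m l) + G m m)"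
      unfolding am by (simp add: add_ac)
    also have "\<dots> = (\<Sum>j<m. if j = i then G i i else 0) + G m m"
      using r1 r2 r3 by simp
    also have "\<dots> = G i i + G m m" using i by (simp add: sum.delta')
    finally show ?thesis .
  qed
  then show ?thesis unfolding sum_EE2 G_def by simp
qed

lemma p_block_sum: "real (card (blk m)) = (\<Sum>i<m. SB m i m + SB m m i)"
proof -
  define G where "G j l = SB m j l" for j l
  have van: "G j l = 0" if "j \<le> m" "l \<le> m" "\<not> pat m m j l" for j l
    unfolding G_def using SB_van[OF _ that] by simp
  have "real (card (blk m)) = (\<Sum>e\<in>blk m. \<Sum>c\<in>EE. \<Sum>d\<in>EE. (CQ e c d)\<^sup>2)"
    using p_row by simp
  also have "\<dots> = (\<Sum>j\<le>m. \<Sum>l\<le>m. G j l)"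
  proof -
    have "(\<Sum>e\<in>blk m. \<Sum>c\<in>EE. \<Sum>d\<in>EE. (CQ e c d)\<^sup>2)
        = (\<Sum>e\<in>blk m. \<Sum>j\<le>m. \<Sum>l\<le>m. \<Sum>c\<in>blk j. \<Sum>d\<in>blk l. (CQ e c d)\<^sup>2)"
      by (simp add: sum_EE2)
    also have "\<dots> = (\<Sum>j\<le>m. \<Sum>e\<in>blk m. \<Sum>l\<le>m. \<Sum>c\<in>blk j. \<Sum>d\<in>blk l. (CQ e c d)\<^sup>2)"
      by (rule sum.swap)
    also have "\<dots> = (\<Sum>j\<le>m. \<Sum>l\<le>m. \<Sum>e\<in>blk m. \<Sum>c\<in>blk j. \<Sum>d\<in>blk l. (CQ e c d)\<^sup>2)"
      by (intro sum.cong refl) (rule sum.swap)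
    finally show ?thesis by (simp add: G_def SB_def)
  qed
  also have "\<dots> = (\<Sum>i<m. G i m + G m i)"
  proof -
    have am: "{..m} = insert m {..<m}" by auto
    have r1: "(\<Sum>l<m. G j l) = 0" if "j < m" for j using van that by (intro sum.neutral) (auto simp: pat_def)
    have r2: "(\<Sum>j<m. (\<Sum>l<m. G j l) + G j m) = (\<Sum>j<m. G j m)" using r1 by simp
    have r3: "G m m = 0" using van by (simp add: pat_def)
    have "(\<Sum>j\<le>m. \<Sum>l\<le>m. G j l) = (\<Sum>j<m. (\<Sum>l<m. G j l) + G j m) + ((\<Sum>l<m. G m l) + G m m)"
      unfolding am by (simp add: add_ac)
    also have "\<dots> = (\<Sum>j<m. G j m) + (\<Sum>l<m. G m l)" using r2 r3 by simp
    finally show ?thesis by (simp add: sum.distrib)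
  qed
  finally show ?thesis by (simp add: G_def)
qed

lemma SB_swap1: "SB m i m = SB i m m"
proof -
  have "SB m i m = (\<Sum>a\<in>blk m. \<Sum>b\<in>blk i. \<Sum>d\<in>blk m. (CQ b a d)\<^sup>2)"
    unfolding SB_def
  proof (intro sum.cong refl)
    fix a b d
    have "br a b = - br b a" by (rule anti)
    then show "(CQ a b d)\<^sup>2 = (CQ b a d)\<^sup>2" by (simp add: CQ_def Q_simps)
  qed
  also have "\<dots> = SB i m m" unfolding SB_def by (rule sum.swap)
  finally show ?thesis .
qed

lemma SB_swap2: assumes i: "i < m" shows "SB m m i = SB m i m"
proof -
  have "SB m m i = (\<Sum>a\<in>blk m. \<Sum>b\<in>blk m. \<Sum>d\<in>blk i. (CQ a d b)\<^sup>2)"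
    unfolding SB_def
  proof (intro sum.cong refl)
    fix a b d assume "a \<in> blk m" "b \<in> blk m" "d \<in> blk i"
    then have "a \<in> EE" "b \<in> EE" "d \<in> EE" using i by (auto simp: EE_def)
    then have "CQ a b d = - (epsv b * epsv d) * CQ a d b" by (rule R2_EE)
    moreover have "epsv b * epsv d = -1"
    proof -
      have "bix b = m" by (rule bix) (use \<open>b \<in> blk m\<close> in auto)
      moreover have "bix d = i" by (rule bix) (use \<open>d \<in> blk i\<close> i in auto)
      ultimately show ?thesis using i by (simp add: epsv_def epsb_def)
    qed
    ultimately show "(CQ a b d)\<^sup>2 = (CQ a d b)\<^sup>2" by simp
  qed
  also have "\<dots> = (\<Sum>a\<in>blk m. \<Sum>d\<in>blk i. \<Sum>b\<in>blk m. (CQ a d b)\<^sup>2)"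
    by (rule sum.cong[OF refl], rule sum.swap)
  also have "\<dots> = SB m i m" by (simp add: SB_def)
  finally show ?thesis .
qed

definition "hh i x y = (\<Sum>c\<in>blk i. Q (br x (br y c)) c)"

lemma killing_on_hh: assumes i: "i < m" shows "killing_on br k (ks i) x y = hh i x y"
proof -
  have qp: "qproj br k (ks i) v = pr i v" for v using qproj_pr[of i v] i by (simp add: cmp_def)
  have lin: "linear (\<lambda>v. br x (br y (pr i v)))"
    using linear_compose[OF pr_lin linear_compose[OF lin_r lin_r]] by (simp add: o_def)
  have "killing_on br k (ks i) x y = (\<Sum>c\<in>EE. Q (br x (br y (pr i c))) c)"
    unfolding killing_on_def qp by (rule trace_onb[OF EE_onb lin]) (simp add: linear_iff Q_simps)
  also have "\<dots> = (\<Sum>j\<le>m. \<Sum>c\<in>blk j. Q (br x (br y (pr i c))) c)" by (rule sum_EE)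
  also have "\<dots> = (\<Sum>j\<le>m. if j = i then hh i x y else 0)"
  proof (intro sum.cong refl)
    fix j assume j: "j \<in> {..m}"
    show "(\<Sum>c\<in>blk j. Q (br x (br y (pr i c))) c) = (if j = i then hh i x y else 0)"
    proof (cases "j = i")
      case True
      have "(\<Sum>c\<in>blk j. Q (br x (br y (pr i c))) c) = hh i x y"
        unfolding hh_def True using i blk_rep blk_comp by (intro sum.cong refl) auto
      then show ?thesis using True by simp
    next
      case False
      have "pr i c = 0" if "c \<in> blk j" for c using pr_other[OF _ _ False blk_comp] that j i by simp
      then show ?thesis using False by (simp add: br_simps Q_simps)
    qed
  qed
  also have "\<dots> = hh i x y" using i by simp
  finally show ?thesis .
qed

lemma hh_row: assumes i: "i < m" and a: "a \<in> blk i"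
  shows "hh i a a = - (\<Sum>c\<in>blk i. \<Sum>d\<in>blk i. (CQ a c d)\<^sup>2)"
proof -
  have ak: "a \<in> k" using blk_comp[OF _ a] i cmp_k by simp
  have "hh i a a = - (\<Sum>c\<in>blk i. Q (br a c) (br a c))"
    unfolding hh_def by (simp add: skew_k[OF ak] Q_sym sum_negf[symmetric])
  also have "\<dots> = - (\<Sum>c\<in>blk i. \<Sum>d\<in>blk i. (CQ a c d)\<^sup>2)"
  proof -
    have "Q (br a c) (br a c) = (\<Sum>d\<in>blk i. (CQ a c d)\<^sup>2)" if c: "c \<in> blk i" for c
    proof -
      have "br a c \<in> ks i" using ks_ideal[OF i] ak blk_comp[OF _ c] i by (auto simp: lie_ideal_of_def cmp_def)
      then have "br a c \<in> cmp i" using i by (simp add: cmp_def)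
      then have "pr i (br a c) = br a c" using blk_rep i by simp
      then have "Q (br a c) (br a c) = Q (pr i (br a c)) (pr i (br a c))" by simp
      also have "\<dots> = (\<Sum>d\<in>blk i. (CQ a c d)\<^sup>2)" using Q_pr[of i] i by (simp add: CQ_def power2_eq_square)
      finally show ?thesis .
    qed
    then show ?thesis by simp
  qed
  finally show ?thesis .
qed

end


context cs begin

lemma Qlin_l2: "linear (\<lambda>x. Q x y)" using Q_bil by (simp add: bilinear_def)

lemma hh_bil: "bilinear (hh i)"
  unfolding bilinear_def hh_def
  by (simp add: linear_iff br_simps Q_simps sum.distrib sum_distrib_left)

lemmas hh_simps = bilinear_ladd[OF hh_bil] bilinear_radd[OF hh_bil] bilinear_lmul[OF hh_bil]
  bilinear_rmul[OF hh_bil] bilinear_lsub[OF hh_bil] bilinear_rsub[OF hh_bil]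
  bilinear_lneg[OF hh_bil] bilinear_rneg[OF hh_bil] bilinear_lzero[OF hh_bil] bilinear_rzero[OF hh_bil]

lemma hh_alt: "x \<in> k \<Longrightarrow> hh i x y = - (\<Sum>c\<in>blk i. Q (br x c) (br y c))"
  unfolding hh_def by (simp add: skew_k Q_sym sum_negf[symmetric])

lemma hh_sym: "x \<in> k \<Longrightarrow> y \<in> k \<Longrightarrow> hh i x y = hh i y x"
  by (simp add: hh_alt Q_sym)

lemma TRZ:
  assumes i: "i < m" and w0: "w0 \<in> ks i" and A: "linear A"
  shows "(\<Sum>c\<in>blk i. Q (A c) (br w0 c)) = - (\<Sum>c\<in>blk i. Q (A (br w0 c)) c)"
proof -
  have w0k: "w0 \<in> k" using w0 ks_k[OF i] by auto
  have im: "i \<le> m" using i by simp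
  have exp: "br w0 c = (\<Sum>c'\<in>blk i. Q (br w0 c) c' *\<^sub>R c')" if c: "c \<in> blk i" for c
  proof -
    have "br w0 c \<in> ks i" using ks_ideal[OF i] w0k w0 blk_comp[OF im c] i by (auto simp: lie_ideal_of_def cmp_def)
    then have "pr i (br w0 c) = br w0 c" using blk_rep[OF im] i by (simp add: cmp_def)
    then show ?thesis by (simp add: pr_def)
  qed
  have QA: "linear (\<lambda>w. Q (A w) u)" for u using linear_compose[OF A Qlin_l2] by (simp add: o_def)
  have "(\<Sum>c\<in>blk i. Q (A c) (br w0 c)) = (\<Sum>c\<in>blk i. \<Sum>c'\<in>blk i. Q (br w0 c) c' * Q (A c) c')"
  proof (intro sum.cong refl)
    fix c assume c: "c \<in> blk i"
    have "Q (A c) (br w0 c) = Q (A c) (\<Sum>c'\<in>blk i. Q (br w0 c) c' *\<^sub>R c')" using exp[OF c] by metis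
    also have "\<dots> = (\<Sum>c'\<in>blk i. Q (A c) (Q (br w0 c) c' *\<^sub>R c'))"
      by (rule linear_sum) (simp add: linear_iff Q_simps)
    finally show "Q (A c) (br w0 c) = (\<Sum>c'\<in>blk i. Q (br w0 c) c' * Q (A c) c')" by (simp add: Q_simps)
  qed
  moreover have "(\<Sum>c\<in>blk i. Q (A (br w0 c)) c) = (\<Sum>c\<in>blk i. \<Sum>c'\<in>blk i. Q (br w0 c) c' * Q (A c') c)"
  proof (intro sum.cong refl)
    fix c assume c: "c \<in> blk i"
    have "Q (A (br w0 c)) c = Q (A (\<Sum>c'\<in>blk i. Q (br w0 c) c' *\<^sub>R c')) c" using exp[OF c] by metis
    also have "\<dots> = (\<Sum>c'\<in>blk i. Q (A (Q (br w0 c) c' *\<^sub>R c')) c)" by (rule linear_sum[OF QA])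
    finally show "Q (A (br w0 c)) c = (\<Sum>c'\<in>blk i. Q (br w0 c) c' * Q (A c') c)"
      by (simp add: linear_scale[OF A] Q_simps)
  qed
  moreover have "(\<Sum>c\<in>blk i. \<Sum>c'\<in>blk i. Q (br w0 c) c' * Q (A c') c)
      = - (\<Sum>c\<in>blk i. \<Sum>c'\<in>blk i. Q (br w0 c') c * Q (A c') c)"
  proof -
    have sk: "Q (br w0 c) c' = - Q (br w0 c') c" for c c'
      using skew_k[OF w0k, of c c'] Q_sym[of c "br w0 c'"] by simp
    have "(\<Sum>c\<in>blk i. \<Sum>c'\<in>blk i. Q (br w0 c) c' * Q (A c') c)
       = (\<Sum>c\<in>blk i. \<Sum>c'\<in>blk i. - (Q (br w0 c') c * Q (A c') c))"
    proof (intro sum.cong refl)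
      fix c c'
      show "Q (br w0 c) c' * Q (A c') c = - (Q (br w0 c') c * Q (A c') c)" using sk[of c c'] by simp
    qed
    then show ?thesis by (simp add: sum_negf)
  qed
  moreover have "(\<Sum>c\<in>blk i. \<Sum>c'\<in>blk i. Q (br w0 c') c * Q (A c') c)
      = (\<Sum>c'\<in>blk i. \<Sum>c\<in>blk i. Q (br w0 c') c * Q (A c') c)" by (rule sum.swap)
  ultimately show ?thesis by simp
qed

lemma hh_inv:
  assumes i: "i < m" and w0: "w0 \<in> ks i"
  shows "hh i (br w0 x) y = - hh i x (br w0 y)"
proof -
  have w0k: "w0 \<in> k" using w0 ks_k[OF i] by auto
  define M where "M v = br x (br y v)" for v
  have Mlin: "linear M" unfolding M_def by (rule lin_ad2)
  have e1: "hh i (br w0 x) y = (\<Sum>c\<in>blk i. Q (br w0 (M c)) c) - (\<Sum>c\<in>blk i. Q (br x (br w0 (br y c))) c)"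
    unfolding hh_def M_def ad_br by (simp add: Q_simps sum_subtractf)
  have e2: "hh i x (br w0 y) = (\<Sum>c\<in>blk i. Q (br x (br w0 (br y c))) c) - (\<Sum>c\<in>blk i. Q (M (br w0 c)) c)"
    unfolding hh_def M_def ad_br by (simp add: Q_simps br_simps sum_subtractf)
  have "(\<Sum>c\<in>blk i. Q (br w0 (M c)) c) = - (\<Sum>c\<in>blk i. Q (M c) (br w0 c))"
    by (simp add: skew_k[OF w0k] sum_negf[symmetric])
  also have "\<dots> = (\<Sum>c\<in>blk i. Q (M (br w0 c)) c)" using TRZ[OF i w0 Mlin] by simp
  finally show ?thesis using e1 e2 by simp
qed

end


context cs begin

lemma cont_lin: "linear f \<Longrightarrow> continuous_on S (f :: 'g \<Rightarrow> 'b::euclidean_space)"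
  by (simp add: linear_continuous_on linear_conv_bounded_linear)

lemma cont_hh: "continuous_on S (\<lambda>x. hh i x x)"
proof -
  have "continuous_on S (\<lambda>x. Q (br x (br x c)) c)" for c
  proof -
    have c1: "continuous_on S (\<lambda>x. br x c)" by (rule cont_lin[OF lin_l])
    have "continuous_on S (\<lambda>x. br x (br x c))"
      by (rule bilinear_continuous_on_compose[OF continuous_on_id c1 bil])
    then show ?thesis by (rule linear_continuous_on_compose[OF _ Qlin_l2])
  qed
  then show ?thesis unfolding hh_def by (intro continuous_on_sum) auto
qed

lemma cont_Q: "continuous_on S (\<lambda>x. Q x x)"
  by (rule bilinear_continuous_on_compose[OF continuous_on_id continuous_on_id Q_bil])

lemma hh_prop_simple:
  assumes i: "i < r" shows "\<exists>\<mu>. \<forall>x\<in>ks i. \<forall>y\<in>ks i. hh i x y = \<mu> * Q x y"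
proof -
  have im: "i < m" using i r_le_m by simp
  define U where "U = ks i"
  have subU: "subspace U" using ks_sub[OF im] by (simp add: U_def)
  have Uk: "U \<subseteq> k" using ks_k[OF im] by (simp add: U_def)
  have Uid: "\<And>a b. a \<in> k \<Longrightarrow> b \<in> U \<Longrightarrow> br a b \<in> U"
    using ks_ideal[OF im] by (auto simp: U_def lie_ideal_of_def)
  define S where "S = sphere 0 1 \<inter> U"
  have cS: "compact S" unfolding S_def by (rule compact_Int_closed[OF compact_sphere closed_subspace[OF subU]])
  obtain x1 where x1: "x1 \<in> U" "x1 \<noteq> 0" using ks_nonzero[OF im] subspace_0[OF subU] by (auto simp: U_def)
  have "(1 / norm x1) *\<^sub>R x1 \<in> S" using x1 subU by (simp add: S_def subspace_scale)
  then have neS: "S \<noteq> {}" by blast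
  have S0: "x \<noteq> 0" if "x \<in> S" for x using that by (auto simp: S_def)
  define f where "f x = hh i x x / Q x x" for x
  have cf: "continuous_on S f"
    unfolding f_def using S0 Q_pos by (intro continuous_on_divide cont_hh cont_Q) force
  obtain x0 where x0: "x0 \<in> S" "\<forall>y\<in>S. f y \<le> f x0"
    using continuous_attains_sup[OF cS neS cf] by blast
  define \<mu> where "\<mu> = f x0"
  have x0U: "x0 \<in> U" and x00: "x0 \<noteq> 0" using x0 S0 by (auto simp: S_def)
  have bound: "hh i y y \<le> \<mu> * Q y y" if y: "y \<in> U" for y
  proof (cases "y = 0")
    case True then show ?thesis by (simp add: hh_simps Q_simps)
  next
    case False
    define t where "t = 1 / norm y"
    have t0: "t \<noteq> 0" using False by (simp add: t_def)
    have "t *\<^sub>R y \<in> S" using y False subU by (simp add: S_def t_def subspace_scale)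
    then have "f (t *\<^sub>R y) \<le> \<mu>" using x0 by (simp add: \<mu>_def)
    moreover have "f (t *\<^sub>R y) = hh i y y / Q y y"
      using t0 by (simp add: f_def hh_simps Q_simps)
    moreover have "Q y y > 0" using Q_pos False by simp
    ultimately show ?thesis by (simp add: divide_le_eq mult.commute)
  qed
  define H where "H x y = hh i x y - \<mu> * Q x y" for x y
  have Hbil: "bilinear H" unfolding H_def bilinear_def
    by (simp add: linear_iff hh_simps Q_simps algebra_simps)
  have Hsym: "H x y = H y x" if "x \<in> U" "y \<in> U" for x y
  proof -
    have "x \<in> k" "y \<in> k" using that Uk by auto
    then show ?thesis using hh_sym[of x y i] Q_sym[of x y] by (simp add: H_def)
  qed
  have Hle: "H y y \<le> 0" if "y \<in> U" for y using bound[OF that] by (simp add: H_def)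
  have H00: "H x0 x0 = 0"
  proof -
    have "Q x0 x0 \<noteq> 0" using Q_pos x00 by (metis less_irrefl)
    then show ?thesis by (simp add: H_def \<mu>_def f_def)
  qed
  have rad: "H x0 y = 0" if y: "y \<in> U" for y
  proof (rule ccontr)
    define A where "A = H x0 y"
    define C where "C = H y y"
    assume "H x0 y \<noteq> 0"
    then have A0: "A \<noteq> 0" by (simp add: A_def)
    have C0: "C \<le> 0" using Hle[OF y] by (simp add: C_def)
    define D where "D = \<bar>C\<bar> + 1"
    have D0: "D > 0" by (simp add: D_def)
    define t where "t = A / D"
    have "x0 + t *\<^sub>R y \<in> U" using x0U y subU by (simp add: subspace_add subspace_scale)
    then have le: "H (x0 + t *\<^sub>R y) (x0 + t *\<^sub>R y) \<le> 0" by (rule Hle)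
    have "H (x0 + t *\<^sub>R y) (x0 + t *\<^sub>R y) = H x0 x0 + t * H x0 y + t * H y x0 + t * t * H y y"
      by (simp add: bilinear_ladd[OF Hbil] bilinear_radd[OF Hbil] bilinear_lmul[OF Hbil] bilinear_rmul[OF Hbil]
          algebra_simps)
    also have "\<dots> = 2 * t * A + t * t * C" using Hsym[OF x0U y] H00 by (simp add: A_def C_def)
    also have "\<dots> = A * A * (2 * D + C) / (D * D)" using D0 by (simp add: t_def field_simps)
    finally have eq: "H (x0 + t *\<^sub>R y) (x0 + t *\<^sub>R y) = A * A * (2 * D + C) / (D * D)" .
    have "2 * D + C > 0" using C0 by (simp add: D_def)
    moreover have "A * A > 0" using A0 by (metis not_real_square_gt_zero)
    ultimately have "A * A * (2 * D + C) / (D * D) > 0" using D0 by simp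
    then show False using le eq by simp
  qed
  define R where "R = {x\<in>U. \<forall>y\<in>U. H x y = 0}"
  have "lie_ideal_of br U R"
    unfolding lie_ideal_of_def
  proof (intro conjI ballI)
    show "subspace R" unfolding R_def subspace_def using subU
      by (auto simp: subspace_def bilinear_ladd[OF Hbil] bilinear_lmul[OF Hbil] bilinear_lzero[OF Hbil])
    show "R \<subseteq> U" by (auto simp: R_def)
  next
    fix x y assume x: "x \<in> U" and y: "y \<in> R"
    have xk: "x \<in> k" using x Uk by auto
    have "br x y \<in> U" using Uid[OF xk] y by (auto simp: R_def)
    moreover have "H (br x y) w = 0" if w: "w \<in> U" for w
    proof -
      have "br x w \<in> U" using Uid[OF xk w] .
      then have "H y (br x w) = 0" using y by (auto simp: R_def)
      moreover have "H (br x y) w = - H y (br x w)"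
        using hh_inv[OF im x[unfolded U_def]] skew_k[OF xk] by (simp add: H_def)
      ultimately show ?thesis by simp
    qed
    ultimately show "br x y \<in> R" by (auto simp: R_def)
  qed
  then have "R = {0} \<or> R = U" using ks_simple_set[OF i] by (auto simp: simple_lie_def U_def)
  moreover have "x0 \<in> R" using rad x0U by (auto simp: R_def)
  ultimately have "R = U" using x00 by blast
  then have "\<forall>x\<in>U. \<forall>y\<in>U. hh i x y = \<mu> * Q x y" by (auto simp: R_def H_def)
  then show ?thesis by (auto simp: U_def)
qed

lemma hh_prop: assumes i: "i < m" shows "\<exists>c. \<forall>x\<in>ks i. \<forall>y\<in>ks i. hh i x y = c * B x y"
proof (cases "i < r")
  case True
  obtain \<mu> where mu: "\<forall>x\<in>ks i. \<forall>y\<in>ks i. hh i x y = \<mu> * Q x y" using hh_prop_simple[OF True] by blast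
  have "\<forall>x\<in>ks i. \<forall>y\<in>ks i. hh i x y = (- \<mu>) * B x y"
    using mu Q_k ks_k[OF i] by auto
  then show ?thesis by blast
next
  case False
  then have z: "i = r" "ks i = z" using ks_cases[OF i] by auto
  have "hh i x y = 0" if "x \<in> ks i" "y \<in> ks i" for x y
  proof -
    have "br y c = 0" if c: "c \<in> blk i" for c
    proof -
      have "c \<in> ks i" using blk_comp[OF _ c] i by (simp add: cmp_def)
      then show ?thesis using \<open>y \<in> ks i\<close> z by (auto simp: centre_def)
    qed
    then show ?thesis by (simp add: hh_def br_simps Q_simps)
  qed
  then show ?thesis by (intro exI[of _ 0]) auto
qed

lemma kappa_prop:
  assumes i: "i < m"
  shows "\<forall>x\<in>ks i. \<forall>y\<in>ks i. killing_on br k (ks i) x y = kappa br k (ks i) * B x y"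
proof -
  obtain c where c: "\<forall>x\<in>ks i. \<forall>y\<in>ks i. hh i x y = c * B x y" using hh_prop[OF i] by blast
  have c': "\<forall>x\<in>ks i. \<forall>y\<in>ks i. killing_on br k (ks i) x y = c * B x y" using c killing_on_hh[OF i] by simp
  obtain x1 where x1: "x1 \<in> ks i" "x1 \<noteq> 0" using ks_nonzero[OF i] subspace_0[OF ks_sub[OF i]] by auto
  have B1: "B x1 x1 \<noteq> 0" using k_neg x1 ks_k[OF i] by (metis less_irrefl subsetD)
  have "kappa br k (ks i) = c"
    unfolding kappa_def
  proof (rule the_equality)
    show "\<forall>x\<in>ks i. \<forall>y\<in>ks i. killing_on br k (ks i) x y = c * B x y" by (rule c')
    fix c2 assume "\<forall>x\<in>ks i. \<forall>y\<in>ks i. killing_on br k (ks i) x y = c2 * B x y"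
    then have "c2 * B x1 x1 = c * B x1 x1" using c' x1 by auto
    then show "c2 = c" using B1 by simp
  qed
  then show ?thesis using c' by simp
qed

abbreviation "kap i \<equiv> kappa br k (ks i)"

lemma row_kap: assumes i: "i < m" and a: "a \<in> blk i"
  shows "(\<Sum>c\<in>blk i. \<Sum>d\<in>blk i. (CQ a c d)\<^sup>2) = kap i"
proof -
  have ak: "a \<in> ks i" using blk_comp[OF _ a] i by (simp add: cmp_def)
  have "B a a = - 1" using Q_k[of a a] blk_Q[OF _ a a] i ks_k[OF i] ak by auto
  then have "hh i a a = - kap i" using kappa_prop[OF i] killing_on_hh[OF i] ak by simp
  then show ?thesis using hh_row[OF i a] by simp
qed

lemma SB_iii: "i < m \<Longrightarrow> SB i i i = kap i * real (card (blk i))"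
  unfolding SB_def by (simp add: row_kap)

lemma SB_imm: assumes i: "i < m" shows "SB i m m = (1 - kap i) * real (card (blk i))"
proof -
  have "(\<Sum>c\<in>blk m. \<Sum>d\<in>blk m. (CQ a c d)\<^sup>2) = 1 - kap i" if a: "a \<in> blk i" for a
    using k_row[OF i a] k_row_split[OF i a] row_kap[OF i a] by simp
  then show ?thesis unfolding SB_def by simp
qed

lemma I0_zero: "{x\<in>k. \<forall>e\<in>p. br x e = 0} = {0}"
proof -
  define I0 where "I0 = {x\<in>k. \<forall>e\<in>p. br x e = 0}"
  have "lie_ideal_of br UNIV I0"
    unfolding lie_ideal_of_def
  proof (intro conjI ballI)
    show "subspace I0" unfolding I0_def subspace_def using sub_k
      by (auto simp: subspace_def br_simps)
    show "I0 \<subseteq> UNIV" by simp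
  next
    fix y x assume x: "x \<in> I0"
    have xk: "x \<in> k" using x by (auto simp: I0_def)
    have "br x (y - K y) = 0" using x P_in by (auto simp: I0_def)
    then have "br (y - K y) x = 0" using anti[of "y - K y" x] by simp
    then have yx: "br y x = br (K y) x" by (simp add: br_simps)
    have "br (br (K y) x) e = 0" if e: "e \<in> p" for e
    proof -
      have "br x e = 0" using x e by (auto simp: I0_def)
      moreover have "br x (br (K y) e) = 0" using x kp_br[OF K_in e] by (auto simp: I0_def)
      ultimately show ?thesis by (simp add: ad_br br_simps)
    qed
    moreover have "br (K y) x \<in> k" using k_br[OF K_in xk] .
    ultimately show "br y x \<in> I0" using yx by (auto simp: I0_def)
  qed
  then have "I0 = {0} \<or> I0 = UNIV" using simp_g by (auto simp: simple_lie_def)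
  moreover have "I0 \<noteq> UNIV"
  proof
    assume "I0 = UNIV"
    obtain e where e: "e \<in> p" "e \<noteq> 0" using p_nonzero by blast
    then have "e \<in> k" using \<open>I0 = UNIV\<close> by (auto simp: I0_def)
    then show False using kp_zero e by blast
  qed
  ultimately show ?thesis by (simp add: I0_def)
qed

lemma Q_nonneg: "Q x x \<ge> 0"
  using Q_pos[of x] by (cases "x = 0") (auto simp: Q_simps)

lemma SB_pos: assumes i: "i < m" shows "SB i m m > 0"
proof -
  have im: "i \<le> m" using i by simp
  obtain x where x: "x \<in> ks i" "x \<noteq> 0" using ks_nonzero[OF i] subspace_0[OF ks_sub[OF i]] by auto
  have xk: "x \<in> k" using x ks_k[OF i] by auto
  obtain e where e: "e \<in> p" "br x e \<noteq> 0" using I0_zero x xk by blast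
  have ab: "\<exists>a\<in>blk i. \<exists>b\<in>blk m. br a b \<noteq> 0"
  proof (rule ccontr)
    assume "\<not> ?thesis"
    then have z0: "\<forall>a\<in>blk i. \<forall>b\<in>blk m. br a b = 0" by blast
    have "x = pr i x" using blk_rep[OF im] x i by (simp add: cmp_def)
    moreover have "e = pr m e" using blk_rep[of m e] e by (simp add: cmp_def)
    ultimately have "br x e = br (\<Sum>a\<in>blk i. Q x a *\<^sub>R a) (\<Sum>b\<in>blk m. Q e b *\<^sub>R b)" by (simp add: pr_def)
    also have "\<dots> = 0" using z0 by (simp add: br_lsum br_rsum br_simps)
    finally show False using e by simp
  qed
  then obtain a b where a: "a \<in> blk i" and b: "b \<in> blk m" and abn: "br a b \<noteq> 0" by blast
  have row: "(\<Sum>d\<in>blk m. (CQ a' b' d)\<^sup>2) = Q (br a' b') (br a' b')" if "a' \<in> blk i" "b' \<in> blk m" for a' b'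
  proof -
    have "br a' b' \<in> p" using kp_br[OF cmp_k[OF i blk_comp[OF im that(1)]] cmp_p[OF blk_comp[OF _ that(2)]]] by simp
    then have "pr m (br a' b') = br a' b'" using blk_rep[of m] by (simp add: cmp_def)
    then show ?thesis using Q_pr[of m "br a' b'" "br a' b'"] by (simp add: CQ_def power2_eq_square)
  qed
  have "SB i m m = (\<Sum>a'\<in>blk i. \<Sum>b'\<in>blk m. Q (br a' b') (br a' b'))"
    unfolding SB_def using row by simp
  also have "\<dots> > 0"
  proof (rule sum_pos2[OF blk_fin[OF im] a])
    show "0 < (\<Sum>b'\<in>blk m. Q (br a b') (br a b'))"
      by (rule sum_pos2[OF blk_fin b]) (auto simp: Q_pos abn Q_nonneg)
    show "0 \<le> (\<Sum>b'\<in>blk m. Q (br a' b') (br a' b'))" if "a' \<in> blk i" for a'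
      by (auto intro!: sum_nonneg simp: Q_nonneg)
  qed
  finally show ?thesis .
qed

end


definition "UU m a K (w::nat \<Rightarrow> real) = (1 + (\<Sum>i<m. a i * w i)) / K"
definition "SF m kd cc a K w = (\<Sum>i<m. kd i * w i / 4 - cc i * (UU m a K w)\<^sup>2 / (4 * w i) - cc i * UU m a K w)"

lemma SF_bound:
  fixes kd cc a :: "nat \<Rightarrow> real"
  assumes K: "K > 0" and kd: "\<forall>i<m. kd i \<ge> 0" and cc: "\<forall>i<m. cc i > 0" and a: "\<forall>i<m. a i > 0"
    and n: "4 * (\<Sum>i<m. cc i) = 2 * n" and w: "\<forall>i<m. w i > 0"
  shows "4 * SF m kd cc a K w \<le> - ((2 * n - (\<Sum>i<m. K * kd i / a i - cc i * a i / K)) / K) * (\<Sum>i<m. a i * w i)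
           - (\<Sum>i<m. cc i / w i) / K\<^sup>2"
proof -
  define s where "s = (\<Sum>i<m. a i * w i)"
  have s0: "s \<ge> 0" unfolding s_def using a w by (intro sum_nonneg) (simp add: less_imp_le)
  have si: "a i * w i \<le> s" if "i < m" for i
    unfolding s_def using that a w by (intro member_le_sum) (auto simp: less_imp_le)
  define U where "U = (1 + s) / K"
  have U: "UU m a K w = U" by (simp add: UU_def U_def s_def)
  have U2: "U\<^sup>2 \<ge> (s\<^sup>2 + 1) / K\<^sup>2"
    unfolding U_def using s0 K by (simp add: power_divide power2_eq_square field_simps)
  have "4 * SF m kd cc a K w = (\<Sum>i<m. kd i * w i) - U\<^sup>2 * (\<Sum>i<m. cc i / w i) - 4 * U * (\<Sum>i<m. cc i)"
    unfolding SF_def U by (simp add: sum_subtractf sum_distrib_left sum_distrib_right sum_divide_distrib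
        sum.distrib algebra_simps)
  also have "\<dots> = (\<Sum>i<m. kd i * w i) - U\<^sup>2 * (\<Sum>i<m. cc i / w i) - 2 * n * U"
    using n by simp
  also have "\<dots> \<le> (\<Sum>i<m. kd i * w i) - ((s\<^sup>2 + 1) / K\<^sup>2) * (\<Sum>i<m. cc i / w i) - 2 * n * U"
  proof -
    have P0: "(\<Sum>i<m. cc i / w i) \<ge> 0" using cc w by (intro sum_nonneg) (simp add: less_imp_le)
    have "((s\<^sup>2 + 1) / K\<^sup>2) * (\<Sum>i<m. cc i / w i) \<le> U\<^sup>2 * (\<Sum>i<m. cc i / w i)"
      by (rule mult_right_mono[OF U2 P0])
    then show ?thesis by linarith
  qed
  also have "\<dots> = ((\<Sum>i<m. kd i * w i) - s\<^sup>2 / K\<^sup>2 * (\<Sum>i<m. cc i / w i)) - (\<Sum>i<m. cc i / w i) / K\<^sup>2 - 2 * n * U"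
    by (simp add: add_divide_distrib algebra_simps)
  also have "\<dots> \<le> s * (\<Sum>i<m. kd i / a i - cc i * a i / K\<^sup>2) - (\<Sum>i<m. cc i / w i) / K\<^sup>2 - 2 * n * U"
  proof -
    have t1: "kd i * w i \<le> s * (kd i / a i)" if i: "i < m" for i
    proof -
      have "a i * w i \<le> s" by (rule si[OF i])
      then have "w i \<le> s / a i" using a i by (simp add: field_simps)
      then have "kd i * w i \<le> kd i * (s / a i)" by (rule mult_left_mono) (use kd i in auto)
      then show ?thesis by (simp add: mult.commute)
    qed
    have t2: "s * (cc i * a i / K\<^sup>2) \<le> s\<^sup>2 / K\<^sup>2 * (cc i / w i)" if i: "i < m" for i
    proof -
      have wi: "w i > 0" using w i by simp
      have "s * (a i * w i) \<le> s * s" using si[OF i] s0 by (simp add: mult_left_mono)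
      then have "s * a i \<le> s * s / w i" using wi by (simp add: field_simps)
      then have "cc i * (s * a i) \<le> cc i * (s * s / w i)" by (rule mult_left_mono) (use cc i in \<open>simp add: less_imp_le\<close>)
      then have "cc i * (s * a i) / K\<^sup>2 \<le> cc i * (s * s / w i) / K\<^sup>2" by (rule divide_right_mono) simp
      then show ?thesis by (simp add: power2_eq_square field_simps)
    qed
    have "(\<Sum>i<m. kd i * w i) - s\<^sup>2 / K\<^sup>2 * (\<Sum>i<m. cc i / w i)
        = (\<Sum>i<m. kd i * w i - s\<^sup>2 / K\<^sup>2 * (cc i / w i))" by (simp add: sum_subtractf sum_distrib_left)
    also have "\<dots> \<le> (\<Sum>i<m. s * (kd i / a i) - s * (cc i * a i / K\<^sup>2))"
      using t1 t2 by (intro sum_mono) (smt (verit) lessThan_iff)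
    also have "\<dots> = s * (\<Sum>i<m. kd i / a i - cc i * a i / K\<^sup>2)"
      by (simp add: sum_subtractf sum_distrib_left right_diff_distrib)
    finally show ?thesis by simp
  qed
  also have "\<dots> \<le> - ((2 * n - (\<Sum>i<m. K * kd i / a i - cc i * a i / K)) / K) * s - (\<Sum>i<m. cc i / w i) / K\<^sup>2"
  proof -
    have "K * (\<Sum>i<m. kd i / a i - cc i * a i / K\<^sup>2) = (\<Sum>i<m. K * (kd i / a i - cc i * a i / K\<^sup>2))"
      by (rule sum_distrib_left)
    also have "\<dots> = (\<Sum>i<m. K * kd i / a i - cc i * a i / K)"
      using K by (intro sum.cong refl) (simp add: power2_eq_square field_simps)
    finally have "(\<Sum>i<m. K * kd i / a i - cc i * a i / K) = K * (\<Sum>i<m. kd i / a i - cc i * a i / K\<^sup>2)" by simp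
    then have e: "s * (\<Sum>i<m. kd i / a i - cc i * a i / K\<^sup>2) = s * (\<Sum>i<m. K * kd i / a i - cc i * a i / K) / K"
      using K by simp
    have "2 * n * U = 2 * n / K + 2 * n * s / K" using K by (simp add: U_def field_simps)
    moreover have "2 * n \<ge> 0" using n cc by (smt (verit) sum_nonneg lessThan_iff)
    ultimately have "2 * n * U \<ge> 2 * n * s / K" using K by simp
    moreover have "- ((2 * n - (\<Sum>i<m. K * kd i / a i - cc i * a i / K)) / K) * s
        = s * (\<Sum>i<m. K * kd i / a i - cc i * a i / K) / K - 2 * n * s / K"
      using K by (simp add: field_simps)
    ultimately show ?thesis using e by linarith
  qed
  finally show ?thesis by (simp add: s_def)
qed

lemma SF_max:
  fixes kd cc a :: "nat \<Rightarrow> real"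
  assumes K: "K > 0" and kd: "\<forall>i<m. kd i \<ge> 0" and cc: "\<forall>i<m. cc i > 0" and a: "\<forall>i<m. a i > 0"
    and n: "4 * (\<Sum>i<m. cc i) = 2 * n"
    and hyp: "(\<Sum>i<m. K * kd i / a i - cc i * a i / K) < 2 * n"
  shows "\<exists>v. (\<forall>i<m. v i > 0) \<and> (\<forall>w. (\<forall>i<m. w i > 0) \<longrightarrow> SF m kd cc a K w \<le> SF m kd cc a K v)"
proof -
  define \<delta> where "\<delta> = (2 * n - (\<Sum>i<m. K * kd i / a i - cc i * a i / K)) / K"
  have \<delta>: "\<delta> > 0" using hyp K by (simp add: \<delta>_def)
  define v0 where "v0 = (\<lambda>i::nat. 1::real)"
  define S0 where "S0 = SF m kd cc a K v0"
  define M0 where "M0 = \<bar>S0\<bar> + 1"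
  have M0: "M0 > 0" by (simp add: M0_def)
  define lo where "lo i = cc i / (4 * K\<^sup>2 * M0)" for i
  define hi where "hi i = 4 * M0 / (\<delta> * a i)" for i
  define box where "box = PiE UNIV (\<lambda>i. if i < m then {lo i..hi i} else {1::real})"
  have inbox: "w \<in> box" if w: "\<forall>i<m. w i > 0" "\<forall>i\<ge>m. w i = 1" "SF m kd cc a K w \<ge> S0" for w
  proof -
    have b: "4 * SF m kd cc a K w \<le> - \<delta> * (\<Sum>i<m. a i * w i) - (\<Sum>i<m. cc i / w i) / K\<^sup>2"
      using SF_bound[OF K kd cc a n w(1)] by (simp add: \<delta>_def)
    have S0M: "- 4 * SF m kd cc a K w \<le> 4 * M0" using w(3) by (simp add: M0_def)
    have p1: "(\<Sum>i<m. a i * w i) \<ge> 0" using a w by (intro sum_nonneg) (simp add: less_imp_le)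
    have p2: "(\<Sum>i<m. cc i / w i) \<ge> 0" using cc w by (intro sum_nonneg) (simp add: less_imp_le)
    have q1: "\<delta> * (\<Sum>i<m. a i * w i) \<ge> 0" using \<delta> p1 by simp
    have q2: "(\<Sum>i<m. cc i / w i) / K\<^sup>2 \<ge> 0" using p2 K by simp
    have B1: "(\<Sum>i<m. cc i / w i) / K\<^sup>2 \<le> 4 * M0" using b S0M q1 by linarith
    have B2: "\<delta> * (\<Sum>i<m. a i * w i) \<le> 4 * M0" using b S0M q2 by linarith
    have "w i \<in> {lo i..hi i}" if i: "i < m" for i
    proof -
      have "cc i / w i \<le> (\<Sum>i<m. cc i / w i)"
        using i cc w by (intro member_le_sum) (auto simp: less_imp_le)
      define X where "X = cc i / w i"
      have "X \<le> (\<Sum>i<m. cc i / w i)" using \<open>cc i / w i \<le> _\<close> by (simp add: X_def)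
      then have "X / K\<^sup>2 \<le> (\<Sum>i<m. cc i / w i) / K\<^sup>2" using K by (simp add: divide_right_mono)
      then have "X / K\<^sup>2 \<le> 4 * M0" using B1 by linarith
      then have "X \<le> 4 * M0 * K\<^sup>2" using pos_divide_le_eq[of "K\<^sup>2" X "4 * M0"] K by simp
      then have "cc i / w i \<le> 4 * M0 * K\<^sup>2" by (simp add: X_def)
      then have L: "lo i \<le> w i" using w(1) i K M0 cc by (simp add: lo_def field_simps)
      have "a i * w i \<le> (\<Sum>i<m. a i * w i)"
        using i a w by (intro member_le_sum) (auto simp: less_imp_le)
      then have "\<delta> * (a i * w i) \<le> \<delta> * (\<Sum>i<m. a i * w i)" using \<delta> by (simp add: mult_left_mono)
      then have "\<delta> * (a i * w i) \<le> 4 * M0" using B2 by linarith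
      then have "w i \<le> hi i" using a i \<delta> by (simp add: hi_def field_simps)
      then show ?thesis using L by simp
    qed
    then show ?thesis using w(2) by (auto simp: box_def PiE_def extensional_def Pi_def)
  qed
  have v0box: "v0 \<in> box" by (rule inbox) (auto simp: v0_def S0_def)
  have cbox: "compact box"
  proof -
    have "compactin (product_topology (\<lambda>i. euclidean) UNIV) box"
      unfolding box_def by (subst compactin_PiE) auto
    then show ?thesis by (simp add: euclidean_product_topology compactin_euclidean_iff)
  qed
  have pos: "w i > 0" if "w \<in> box" "i < m" for w i
  proof -
    have "w i \<in> (if i < m then {lo i..hi i} else {1})" using that(1) by (auto simp: box_def PiE_def Pi_def)
    then have "w i \<ge> lo i" using that(2) by simp
    moreover have "lo i > 0" using cc that(2) K M0 by (simp add: lo_def)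
    ultimately show ?thesis by simp
  qed
  have cont: "continuous_on box (SF m kd cc a K)"
  proof -
    have c: "continuous_on box (\<lambda>w. w i)" for i
      by (rule continuous_on_subset[OF continuous_on_product_coordinates]) simp
    have cu: "continuous_on box (UU m a K)"
      unfolding UU_def using K by (intro continuous_intros c) auto
    have nz: "\<forall>x\<in>box. 4 * x i \<noteq> 0" if "i \<in> {..<m}" for i
    proof
      fix x assume "x \<in> box"
      then have "x i > 0" using pos that by simp
      then show "4 * x i \<noteq> 0" by simp
    qed
    show ?thesis unfolding SF_def
      by (intro continuous_intros c cu) (use nz in auto)
  qed
  obtain v where v: "v \<in> box" "\<forall>w\<in>box. SF m kd cc a K w \<le> SF m kd cc a K v"
    using continuous_attains_sup[OF cbox _ cont] v0box by blast
  have vpos: "\<forall>i<m. v i > 0" using pos v(1) by blast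
  have "SF m kd cc a K w \<le> SF m kd cc a K v" if w: "\<forall>i<m. w i > 0" for w
  proof -
    define w' where "w' i = (if i < m then w i else 1)" for i
    have same: "SF m kd cc a K w' = SF m kd cc a K w"
      unfolding SF_def UU_def w'_def by simp
    have w'1: "\<forall>i<m. w' i > 0" "\<forall>i\<ge>m. w' i = 1" using w by (auto simp: w'_def)
    show ?thesis
    proof (cases "SF m kd cc a K w' \<ge> S0")
      case True
      then have "w' \<in> box" using inbox w'1 by blast
      then show ?thesis using v same by auto
    next
      case False
      moreover have "S0 \<le> SF m kd cc a K v" using v v0box by (simp add: S0_def)
      ultimately show ?thesis using same by simp
    qed
  qed
  then show ?thesis using vpos by blast
qed


context cs begin

abbreviation "dd i \<equiv> real (card (blk i))"
abbreviation "cc i \<equiv> SB i m m"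

lemma Wb_vals:
  assumes c0: "c0 > 0" and i: "i < m" and ci: "c i > 0"
  shows "Wb c0 c i i i = 1 / (4 * c i)" "Wb c0 c i m m = c i / (4 * c0\<^sup>2)"
    "Wb c0 c m i m = c i / (4 * c0\<^sup>2)" "Wb c0 c m m i = - 3 * c i / (4 * c0\<^sup>2) - 1 / c0"
  using c0 i ci by (simp_all add: Wb_def wt_def epsb_def field_simps power2_eq_square)

lemma scal_final:
  assumes c0: "c0 > 0" and c: "\<forall>i<m. c i > 0"
  shows "scal (kform br k ks m c0 c) br = (\<Sum>i<m. kap i * dd i / (4 * c i) - cc i * c i / (4 * c0\<^sup>2) - cc i / c0)"
  unfolding scal_SB[OF c0 c]
proof (intro sum.cong refl)
  fix i assume "i \<in> {..<m}"
  then have i: "i < m" by simp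
  have ci: "c i > 0" using c i by simp
  show "Wb c0 c i i i * SB i i i + Wb c0 c i m m * SB i m m + Wb c0 c m i m * SB m i m + Wb c0 c m m i * SB m m i
      = kap i * dd i / (4 * c i) - cc i * c i / (4 * c0\<^sup>2) - cc i / c0"
    unfolding Wb_vals[of c0 i c, OF c0 i ci] SB_swap2[OF i] SB_swap1 SB_iii[OF i]
    using c0 ci by (simp add: field_simps power2_eq_square)
qed

lemma kform_bil: "bilinear (kform br k ks m t0 t)"
proof -
  have "bilinear (\<lambda>x y. \<Sum>a\<in>EE. lamw t0 t a * Q x a * Q y a)"
    unfolding bilinear_def
    by (simp add: linear_iff Q_simps sum.distrib sum_distrib_left algebra_simps)
  then show ?thesis by (simp add: kform_lam[abs_def])
qed

lemma tr_final:
  assumes c0: "c0 > 0" and c: "\<forall>i<m. c i > 0"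
  shows "tr_wrt (kform br k ks m c0 c) (kform br k ks m t0 t) = t0 * real (card (blk m)) / c0 + (\<Sum>i<m. t i * dd i / c i)"
proof -
  have lp: "lamw c0 c a > 0" if "a \<in> EE" for a
    using EE_cmp[OF that] c0 c by (auto simp: lamw_def wt_def)
  interpret dg: diag br Q EE "lamw c0 c"
    by unfold_locales (auto simp: Q_bil Q_sym EE_onb lp)
  have gm: "kform br k ks m c0 c = dg.gm"
    by (intro ext) (simp add: kform_lam dg.gm_def)
  have Taa: "kform br k ks m t0 t a a = lamw t0 t a" if a: "a \<in> EE" for a
  proof -
    have "kform br k ks m t0 t a a = (\<Sum>b\<in>EE. if b = a then lamw t0 t a else 0)"
      unfolding kform_lam using a by (intro sum.cong refl) (auto simp: EE_Q)
    then show ?thesis using a finEE by simp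
  qed
  have "tr_wrt (kform br k ks m c0 c) (kform br k ks m t0 t) = (\<Sum>a\<in>EE. kform br k ks m t0 t a a / lamw c0 c a)"
    unfolding gm by (rule dg.tr_wrt_E[OF kform_bil])
  also have "\<dots> = (\<Sum>j\<le>m. \<Sum>a\<in>blk j. wt t0 t j / wt c0 c j)"
    unfolding sum_EE
  proof (intro sum.cong refl)
    fix j a assume j: "j \<in> {..m}" and a: "a \<in> blk j"
    then have "a \<in> EE" by (auto simp: EE_def)
    then show "kform br k ks m t0 t a a / lamw c0 c a = wt t0 t j / wt c0 c j"
      using Taa bix[of j a] j a by (simp add: lamw_def)
  qed
  also have "\<dots> = (\<Sum>j\<le>m. real (card (blk j)) * (wt t0 t j / wt c0 c j))" by simp
  also have "\<dots> = t0 * real (card (blk m)) / c0 + (\<Sum>i<m. t i * dd i / c i)"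
    by (simp add: lessThan_Suc_atMost[symmetric] wt_def ac_simps)
  finally show ?thesis .
qed

lemma card_blk_m: "card (blk m) = dim p"
  using blk_onb(2)[of m] by (simp add: cmp_def)

lemma card_blk_i: "i < m \<Longrightarrow> card (blk i) = dim (ks i)"
  using blk_onb(2)[of i] by (simp add: cmp_def)

lemma dim_p_pos: "dim p > 0"
proof -
  obtain e where "e \<in> p" "e \<noteq> 0" using p_nonzero by blast
  then have "\<not> p \<subseteq> {0}" by blast
  then show ?thesis using dim_eq_0[of p] by (metis gr0I)
qed

lemma dim_ks_pos: "i < m \<Longrightarrow> dim (ks i) > 0"
  using ks_nonzero ks_sub subspace_0 dim_eq_0 by blast

lemma n_ident: "4 * (\<Sum>i<m. cc i) = 2 * real (card (blk m))"
  using p_block_sum by (simp add: SB_swap1 SB_swap2 sum.distrib sum_distrib_left)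

lemma kap_nonneg: assumes i: "i < m" shows "kap i \<ge> 0"
proof -
  have "SB i i i \<ge> 0" unfolding SB_def by (intro sum_nonneg) auto
  moreover have "dd i > 0" using card_blk_i[OF i] dim_ks_pos[OF i] by simp
  ultimately show ?thesis using SB_iii[OF i] by (simp add: zero_le_mult_iff)
qed

lemma main:
  fixes Tp :: real and Tk :: "nat \<Rightarrow> real"
  assumes Tp: "Tp > 0" and Tk: "\<forall>i<m. Tk i > 0"
    and hyp: "(\<Sum>i<m. (real (dim p) ^ 2 * kap i * Tp ^ 2
              - real (dim (ks i)) ^ 2 * (1 - kap i) * Tk i ^ 2)
             / (real (dim p) * Tp * Tk i))
         - 2 * real (dim p) < 0"
  shows "\<exists>g\<in>MTminus br k ks m (kform br k ks m (- Tp) Tk).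
           \<forall>h\<in>MTminus br k ks m (kform br k ks m (- Tp) Tk). scal h br \<le> scal g br"
proof -
  define nn where "nn = real (dim p)"
  have nn: "nn > 0" using dim_p_pos by (simp add: nn_def)
  have nnc: "real (card (blk m)) = nn" by (simp add: nn_def card_blk_m)
  define K where "K = nn * Tp"
  have K: "K > 0" using nn Tp by (simp add: K_def)
  define kd where "kd i = kap i * dd i" for i
  define a where "a i = Tk i * dd i" for i
  have ddp: "dd i > 0" if "i < m" for i using card_blk_i[OF that] dim_ks_pos[OF that] by simp
  have kd: "\<forall>i<m. kd i \<ge> 0" using kap_nonneg ddp by (simp add: kd_def less_imp_le)
  have ccp: "\<forall>i<m. cc i > 0" using SB_pos by blast
  have a: "\<forall>i<m. a i > 0" using Tk ddp by (simp add: a_def)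
  have n4: "4 * (\<Sum>i<m. cc i) = 2 * nn" using n_ident nnc by simp
  have hyp': "(\<Sum>i<m. K * kd i / a i - cc i * a i / K) < 2 * nn"
  proof -
    have "(\<Sum>i<m. K * kd i / a i - cc i * a i / K) =
        (\<Sum>i<m. (real (dim p) ^ 2 * kap i * Tp ^ 2 - real (dim (ks i)) ^ 2 * (1 - kap i) * Tk i ^ 2)
             / (real (dim p) * Tp * Tk i))"
    proof (intro sum.cong refl)
      fix i assume "i \<in> {..<m}"
      then have i: "i < m" by simp
      have e1: "real (dim (ks i)) = dd i" using card_blk_i[OF i] by simp
      have e2: "cc i = (1 - kap i) * dd i" using SB_imm[OF i] by simp
      have "Tk i > 0" "dd i > 0" using Tk ddp i by auto
      then show "K * kd i / a i - cc i * a i / K =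
          (real (dim p) ^ 2 * kap i * Tp ^ 2 - real (dim (ks i)) ^ 2 * (1 - kap i) * Tk i ^ 2)
             / (real (dim p) * Tp * Tk i)"
        unfolding e1 e2 nn_def[symmetric] K_def kd_def a_def using nn Tp
        by (simp add: field_simps power2_eq_square)
    qed
    then show ?thesis using hyp by (simp add: nn_def)
  qed
  obtain v where v: "\<forall>i<m. v i > 0" and vmax: "\<forall>w. (\<forall>i<m. w i > 0) \<longrightarrow> SF m kd cc a K w \<le> SF m kd cc a K v"
    using SF_max[OF K kd ccp a n4 hyp'] by blast
  have UUpos: "UU m a K w > 0" if "\<forall>i<m. w i > 0" for w
  proof -
    have "(\<Sum>i<m. a i * w i) \<ge> 0" using a that by (intro sum_nonneg) (simp add: less_imp_le)
    then show ?thesis using K by (simp add: UU_def)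
  qed
  have scal_SF: "scal (kform br k ks m c0 c) br = SF m kd cc a K w"
    if c0: "c0 > 0" and c: "\<forall>i<m. c i > 0" and wc: "\<forall>i<m. w i = 1 / c i" and u: "UU m a K w = 1 / c0" for c0 c w
    unfolding scal_final[OF c0 c] SF_def u
  proof (intro sum.cong refl)
    fix i assume "i \<in> {..<m}"
    then have ci: "c i > 0" and wi: "w i = 1 / c i" using c wc by auto
    show "kap i * dd i / (4 * c i) - cc i * c i / (4 * c0\<^sup>2) - cc i / c0 =
        kd i * w i / 4 - cc i * (1 / c0)\<^sup>2 / (4 * w i) - cc i * (1 / c0)"
      unfolding wi kd_def using ci c0 by (simp add: field_simps power2_eq_square)
  qed
  have trT: "tr_wrt (kform br k ks m c0 c) (kform br k ks m (- Tp) Tk) = - Tp * nn / c0 + (\<Sum>i<m. a i * w i)"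
    if c0: "c0 > 0" and c: "\<forall>i<m. c i > 0" and wc: "\<forall>i<m. w i = 1 / c i" for c0 c w
  proof -
    have "(\<Sum>i<m. Tk i * dd i / c i) = (\<Sum>i<m. a i * w i)"
      using wc by (intro sum.cong refl) (simp add: a_def)
    then show ?thesis using tr_final[OF c0 c, of "- Tp" Tk] nnc by simp
  qed
  define b0 where "b0 = 1 / UU m a K v"
  define al where "al i = 1 / v i" for i
  have b0: "b0 > 0" using UUpos[OF v] by (simp add: b0_def)
  have al: "\<forall>i<m. al i > 0" using v by (simp add: al_def)
  have val: "\<forall>i<m. v i = 1 / al i" using v by (simp add: al_def)
  have uv: "UU m a K v = 1 / b0" by (simp add: b0_def)
  define g where "g = kform br k ks m b0 al"
  have gM: "g \<in> MTminus br k ks m (kform br k ks m (- Tp) Tk)"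
  proof -
    have "g \<in> MK br k ks m" using b0 al by (auto simp: MK_def g_def)
    moreover have "tr_wrt g (kform br k ks m (- Tp) Tk) = -1"
    proof -
      have "tr_wrt g (kform br k ks m (- Tp) Tk) = - Tp * nn / b0 + (\<Sum>i<m. a i * v i)"
        unfolding g_def by (rule trT[OF b0 al val])
      also have "\<dots> = - Tp * nn * UU m a K v + (\<Sum>i<m. a i * v i)" by (simp add: b0_def)
      also have "\<dots> = -1" using nn Tp by (simp add: UU_def K_def field_simps)
      finally show ?thesis .
    qed
    ultimately show ?thesis by (simp add: MTminus_def)
  qed
  have "scal h br \<le> scal g br" if h: "h \<in> MTminus br k ks m (kform br k ks m (- Tp) Tk)" for h
  proof -
    obtain be alh where hdef: "h = kform br k ks m be alh" and be: "be > 0" and alh: "\<forall>i<m. alh i > 0"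
      using h by (auto simp: MTminus_def MK_def)
    have tr: "tr_wrt h (kform br k ks m (- Tp) Tk) = -1" using h by (simp add: MTminus_def)
    define w where "w i = 1 / alh i" for i
    have w: "\<forall>i<m. w i > 0" using alh by (simp add: w_def)
    have wc: "\<forall>i<m. w i = 1 / alh i" by (simp add: w_def)
    have "- Tp * nn / be + (\<Sum>i<m. a i * w i) = -1" using tr trT[OF be alh wc] hdef by simp
    then have "UU m a K w = 1 / be" using nn Tp be by (simp add: UU_def K_def field_simps)
    then have "scal h br = SF m kd cc a K w" using scal_SF[OF be alh wc] hdef by simp
    also have "\<dots> \<le> SF m kd cc a K v" using vmax w by blast
    also have "\<dots> = scal g br" using scal_SF[OF b0 al val uv] by (simp add: g_def)
    finally show ?thesis .
  qed
  then show ?thesis using gM by blast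
qed

end

theorem theorem5p5:
  fixes br :: "'g::euclidean_space \<Rightarrow> 'g \<Rightarrow> 'g" and k :: "'g set"
    and ks :: "nat \<Rightarrow> 'g set" and r m :: nat
    and Tp :: real and Tk :: "nat \<Rightarrow> real"
  assumes "lie_algebra br" and "simple_lie br UNIV" and "noncompact_lie br"
    and "cartan_subalg br k" and "k_decomp br k ks r m"
    and "Tp > 0" and "\<forall>i<m. Tk i > 0"
    and "(\<Sum>i<m. (real (dim (kperp br k)) ^ 2 * kappa br k (ks i) * Tp ^ 2
              - real (dim (ks i)) ^ 2 * (1 - kappa br k (ks i)) * Tk i ^ 2)
             / (real (dim (kperp br k)) * Tp * Tk i))
         - 2 * real (dim (kperp br k)) < 0"
  shows "\<exists>g\<in>MTminus br k ks m (kform br k ks m (- Tp) Tk).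
           \<forall>h\<in>MTminus br k ks m (kform br k ks m (- Tp) Tk). scal h br \<le> scal g br"
  proof -
  have I: "cs br k ks r m" unfolding cs_def cs_axioms_def lie_def using assms by blast
  show ?thesis by (rule cs.main[OF I assms(6,7,8)])
qed

end
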